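(* Let $\varepsilon>0$ be a constant and $d=d(n)$. If $\mathbb{F}$ is finite, then the fraction of $n^d\times n^d$ matrices over $\mathbb{F}$ with $\mathrm{PT\text{-}rank}\le(\tfrac12-\varepsilon)n^d$ tends to $0$ as $n\to\infty$. If $\mathbb{F}$ is infinite, then for all sufficiently large $n$ the set of $n^d\times n^d$ matrices with $\mathrm{PT\text{-}rank}\le(\tfrac12-\varepsilon)n^d$ has Zariski closure of dimension strictly less than $n^{2d}$. (That is, asymptotically almost all $n^d\times n^d$ matrices have PT-rank at least $(\tfrac12-\varepsilon)n^d$.)
   Context: Rows and columns of $n^d\times n^d$ matrices are indexed by $[n]^d$. For $k\in[d]$, $M^{\top_k}_{(i_1,\dots,i_d),(j_1,\dots,j_d)}=M_{(\dots,i_{k-1},j_k,i_{k+1},\dots),(\dots,j_{k-1},i_k,j_{k+1},\dots)}$; $M^{\top_\kappa}$ is the composition over $k\in\kappa\subseteq[d]$. $M$ is PT-basic if $\mathrm{rank}(M^{\top_\kappa})=1$ for some $\kappa$; $\mathrm{PT\text{-}rank}(M)$ is the least number of PT-basic matrices summing to $M$. *)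

theory Defs
  imports Complex_Main "HOL-Library.Function_Algebras" "HOL-Library.Poly_Mapping" "HOL-Library.Extended_Nat"
begin

text \<open>Multi-indices in [n]^d are lists of length d with entries < n (0-based).
  An n^d x n^d matrix is a function idx => idx => 'a that vanishes outside
  idx_set n d x idx_set n d.\<close>

definition idx_set :: "nat \<Rightarrow> nat \<Rightarrow> nat list set" where
  "idx_set n d = {i. length i = d \<and> (\<forall>k<d. i ! k < n)}"

definition mats :: "nat \<Rightarrow> nat \<Rightarrow> (nat list \<Rightarrow> nat list \<Rightarrow> 'a::zero) set" where
  "mats n d = {M. \<forall>i j. (i \<notin> idx_set n d \<or> j \<notin> idx_set n d) \<longrightarrow> M i j = 0}"

definition mix :: "nat set \<Rightarrow> nat list \<Rightarrow> nat list \<Rightarrow> nat list" where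
  "mix K a b = map (\<lambda>k. if k \<in> K then a ! k else b ! k) [0..<length b]"

text \<open>Partial transpose over the set K of tensor factors (0-based factors).\<close>
definition ptrans :: "nat \<Rightarrow> nat \<Rightarrow> nat set \<Rightarrow> (nat list \<Rightarrow> nat list \<Rightarrow> 'a::zero)
    \<Rightarrow> (nat list \<Rightarrow> nat list \<Rightarrow> 'a)" where
  "ptrans n d K M = (\<lambda>i j. if i \<in> idx_set n d \<and> j \<in> idx_set n d
       then M (mix K j i) (mix K i j) else 0)"

text \<open>Rank: dimension of the column space, inside the vector space of functions
  nat list => 'a with pointwise scalar multiplication.\<close>
definition fscale :: "'a::field \<Rightarrow> ('b \<Rightarrow> 'a) \<Rightarrow> ('b \<Rightarrow> 'a)" where
  "fscale c f = (\<lambda>x. c * f x)"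

definition mrank :: "nat \<Rightarrow> nat \<Rightarrow> (nat list \<Rightarrow> nat list \<Rightarrow> 'a::field) \<Rightarrow> nat" where
  "mrank n d M = vector_space.dim fscale ((\<lambda>j. (\<lambda>i. M i j)) ` idx_set n d)"

definition pt_basic :: "nat \<Rightarrow> nat \<Rightarrow> (nat list \<Rightarrow> nat list \<Rightarrow> 'a::field) \<Rightarrow> bool" where
  "pt_basic n d M \<longleftrightarrow> M \<in> mats n d \<and>
     (\<exists>K \<subseteq> {0..<d}. mrank n d (ptrans n d K M) = 1)"

definition pt_rank :: "nat \<Rightarrow> nat \<Rightarrow> (nat list \<Rightarrow> nat list \<Rightarrow> 'a::field) \<Rightarrow> nat" where
  "pt_rank n d M = (LEAST r. \<exists>Ms. length Ms = r \<and> (\<forall>A \<in> set Ms. pt_basic n d A)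
                                 \<and> M = sum_list Ms)"

text \<open>Polynomials in the matrix entries x_(i,j): finitely supported maps from
  monomials (finitely supported exponent vectors) to coefficients.\<close>
type_synonym 'a mpoly = "((nat list \<times> nat list) \<Rightarrow>\<^sub>0 nat) \<Rightarrow>\<^sub>0 'a"

definition mpeval :: "'a::comm_ring_1 mpoly \<Rightarrow> (nat list \<Rightarrow> nat list \<Rightarrow> 'a) \<Rightarrow> 'a" where
  "mpeval p M = (\<Sum>m \<in> Poly_Mapping.keys p. Poly_Mapping.lookup p m *
       (\<Prod>v \<in> Poly_Mapping.keys (m :: (nat list \<times> nat list) \<Rightarrow>\<^sub>0 nat).
           M (fst v) (snd v) ^ Poly_Mapping.lookup m v))"

definition zvanish :: "nat \<Rightarrow> nat \<Rightarrow> 'a::comm_ring_1 mpoly set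
    \<Rightarrow> (nat list \<Rightarrow> nat list \<Rightarrow> 'a) set" where
  "zvanish n d P = {M \<in> mats n d. \<forall>p\<in>P. mpeval p M = 0}"

definition zclosed :: "nat \<Rightarrow> nat \<Rightarrow> (nat list \<Rightarrow> nat list \<Rightarrow> 'a::comm_ring_1) set \<Rightarrow> bool" where
  "zclosed n d Z \<longleftrightarrow> (\<exists>P. Z = zvanish n d P)"

definition zclosure :: "nat \<Rightarrow> nat \<Rightarrow> (nat list \<Rightarrow> nat list \<Rightarrow> 'a::comm_ring_1) set
    \<Rightarrow> (nat list \<Rightarrow> nat list \<Rightarrow> 'a) set" where
  "zclosure n d S = \<Inter>{Z. zclosed n d Z \<and> S \<subseteq> Z}"

definition zirreducible :: "nat \<Rightarrow> nat \<Rightarrow> (nat list \<Rightarrow> nat list \<Rightarrow> 'a::comm_ring_1) set \<Rightarrow> bool" where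
  "zirreducible n d Z \<longleftrightarrow> zclosed n d Z \<and> Z \<noteq> {} \<and>
     (\<forall>Z1 Z2. zclosed n d Z1 \<and> zclosed n d Z2 \<and> Z = Z1 \<union> Z2 \<longrightarrow> Z = Z1 \<or> Z = Z2)"

definition zdim :: "nat \<Rightarrow> nat \<Rightarrow> (nat list \<Rightarrow> nat list \<Rightarrow> 'a::comm_ring_1) set \<Rightarrow> enat" where
  "zdim n d X = Sup {enat k | k. \<exists>Z :: nat \<Rightarrow> (nat list \<Rightarrow> nat list \<Rightarrow> 'a) set.
      (\<forall>t\<le>k. zirreducible n d (Z t) \<and> Z t \<subseteq> X) \<and> (\<forall>t<k. Z t \<subset> Z (Suc t))}"

end

theory Submission
  imports Defs "HOL-Library.FuncSet"
begin

global_interpretation fs: vector_space "fscale :: 'a::field \<Rightarrow> ('b \<Rightarrow> 'a) \<Rightarrow> ('b \<Rightarrow> 'a)"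
  by unfold_locales (auto simp: fscale_def fun_eq_iff algebra_simps)

lemma fscale_apply[simp]: "fscale c f x = c * f x"
  by (simp add: fscale_def)

lemma linI:
  assumes "\<And>x y. f (x + y) = f x + f y" "\<And>c x. f (fscale c x) = fscale c (f x)"
  shows "module_hom (fscale :: 'a::field \<Rightarrow> ('b \<Rightarrow> 'a) \<Rightarrow> _) (fscale :: 'a \<Rightarrow> ('c \<Rightarrow> 'a) \<Rightarrow> _) f"
  using assms by (auto simp: module_hom_iff intro: fs.module_axioms)

lemma fin_basis:
  assumes "S \<subseteq> fs.span T" "finite T"
  obtains B where "B \<subseteq> S" "fs.independent B" "S \<subseteq> fs.span B" "card B = fs.dim S" "finite B"
  using fs.basis_exists[of S] fs.independent_span_bound[OF assms(2)] assms(1)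
  by (metis order_trans)

lemma indep_card_le_dim:
  assumes "fs.independent B" "B \<subseteq> fs.span S" "S \<subseteq> fs.span T" "finite T"
  shows "card B \<le> fs.dim S"
proof -
  obtain C where C: "C \<subseteq> S" "fs.independent C" "S \<subseteq> fs.span C" "card C = fs.dim S" "finite C"
    using fin_basis[OF assms(3,4)] by blast
  have "B \<subseteq> fs.span C"
    using assms(2) C(3) by (metis fs.span_mono fs.span_span order_trans)
  then show ?thesis using fs.independent_span_bound[OF C(5) assms(1)] C(4) by simp
qed

lemma dim_mono_fin:
  assumes "A \<subseteq> fs.span B" "B \<subseteq> fs.span T" "finite T"
  shows "fs.dim A \<le> fs.dim B"
proof -
  have "A \<subseteq> fs.span T" using assms by (metis fs.span_mono fs.span_span order_trans)
  then obtain C where C: "C \<subseteq> A" "fs.independent C" "A \<subseteq> fs.span C" "card C = fs.dim A" "finite C"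
    using fin_basis[OF _ assms(3)] by blast
  have "C \<subseteq> fs.span B" using C(1) assms(1) by auto
  then show ?thesis using indep_card_le_dim[OF C(2) _ assms(2,3)] C(4) by simp
qed

lemma dim_image_le_fin:
  assumes lf: "module_hom fscale fscale f" and S: "S \<subseteq> fs.span T" "finite T"
  shows "fs.dim (f ` S) \<le> fs.dim S"
proof -
  interpret lf: module_hom fscale fscale f by fact
  obtain B where B: "B \<subseteq> S" "fs.independent B" "S \<subseteq> fs.span B" "card B = fs.dim S" "finite B"
    using fin_basis[OF S] by blast
  have "fs.dim (f ` S) \<le> card (f ` B)"
    apply (rule fs.span_card_ge_dim)
    using B lf.spans_image by auto
  also have "\<dots> \<le> fs.dim S"
    using card_image_le[OF B(5)] B by simp
  finally show ?thesis .
qed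

lemma dim_image_eq_fin:
  assumes lf: "module_hom fscale fscale f" and fi: "inj_on f (fs.span S)"
  shows "fs.dim (f ` S) = fs.dim S"
proof -
  interpret lf: module_hom fscale fscale f by fact
  obtain B where B: "B \<subseteq> S" "fs.independent B" "S \<subseteq> fs.span B" "card B = fs.dim S"
    using fs.basis_exists[of S] by auto
  then have "fs.span S = fs.span B"
    using fs.span_mono[of B S] fs.span_mono[of S "fs.span B"] fs.span_span[of B] by auto
  moreover have "card (f ` B) = card B"
    using assms card_image[of f B] inj_on_subset[of f "fs.span S" B] B fs.span_superset by auto
  moreover have "(f ` B) \<subseteq> (f ` S)"
    using B by auto
  ultimately show ?thesis
    by (metis B(2) B(4) fi lf.dependent_inj_imageD lf.span_image fs.dim_eq_card_independent fs.dim_span)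
qed

lemma dim_kernel_ineq:
  fixes \<rho> \<mu> :: "('b \<Rightarrow> 'a::field) \<Rightarrow> ('b \<Rightarrow> 'a)"
  assumes l\<rho>: "module_hom fscale fscale \<rho>" and l\<mu>: "module_hom fscale fscale \<mu>"
    and G: "finite G" and G': "finite G'"
    and sub: "\<mu> ` fs.span G' \<subseteq> fs.span G" and inj: "inj_on \<mu> (fs.span G')"
    and zero: "\<And>x. x \<in> fs.span G' \<Longrightarrow> \<rho> (\<mu> x) = 0"
  shows "fs.dim (\<rho> ` fs.span G) + fs.dim (fs.span G') \<le> fs.dim (fs.span G)"
proof -
  interpret r: module_hom fscale fscale \<rho> by fact
  interpret m: module_hom fscale fscale \<mu> by fact
  have "\<rho> ` fs.span G \<subseteq> fs.span (\<rho> ` G)" by (simp add: r.span_image)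
  then obtain C where C: "C \<subseteq> \<rho> ` fs.span G" "fs.independent C" "\<rho> ` fs.span G \<subseteq> fs.span C"
      "card C = fs.dim (\<rho> ` fs.span G)" "finite C"
    using fin_basis[of "\<rho> ` fs.span G" "\<rho> ` G"] G by blast
  obtain B1 where B1: "B1 \<subseteq> fs.span G'" "fs.independent B1" "fs.span G' \<subseteq> fs.span B1"
      "card B1 = fs.dim (fs.span G')" "finite B1"
    using fin_basis[of "fs.span G'" G'] G' by blast
  have "\<forall>c\<in>C. \<exists>x\<in>fs.span G. \<rho> x = c" using C(1) by blast
  then obtain \<sigma> where \<sigma>: "\<And>c. c \<in> C \<Longrightarrow> \<sigma> c \<in> fs.span G \<and> \<rho> (\<sigma> c) = c" by metis
  have inj\<sigma>: "inj_on \<sigma> C" by (metis \<sigma> inj_onI)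
  have injB1: "inj_on \<mu> B1" using inj B1(1) inj_on_subset by blast
  have C0: "0 \<notin> C" using C(2) fs.dependent_zero by blast
  have disj: "\<sigma> ` C \<inter> \<mu> ` B1 = {}"
  proof (rule ccontr)
    assume "\<sigma> ` C \<inter> \<mu> ` B1 \<noteq> {}"
    then obtain c b where "c \<in> C" "b \<in> B1" "\<sigma> c = \<mu> b" by auto
    then have "c = 0" using \<sigma>[of c] zero[of b] B1(1) by auto
    with C0 \<open>c \<in> C\<close> show False by simp
  qed
  define T where "T = \<sigma> ` C \<union> \<mu> ` B1"
  have finT: "finite T" using C(5) B1(5) T_def by auto
  have cardT: "card T = card C + card B1"
    unfolding T_def using card_Un_disjoint[OF _ _ disj] C(5) B1(5)
      card_image[OF inj\<sigma>] card_image[OF injB1] by auto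
  have TG: "T \<subseteq> fs.span G" unfolding T_def using \<sigma> sub B1(1) by auto
  have indT: "fs.independent T"
  proof (rule fs.independent_if_scalars_zero[OF finT])
    fix f x assume sum0: "(\<Sum>x\<in>T. fscale (f x) x) = 0" and xT: "x \<in> T"
    have split: "(\<Sum>x\<in>T. fscale (f x) x) = (\<Sum>x\<in>\<sigma> ` C. fscale (f x) x) + (\<Sum>x\<in>\<mu> ` B1. fscale (f x) x)"
      unfolding T_def by (rule sum.union_disjoint) (use C(5) B1(5) disj in auto)
    have s1: "(\<Sum>x\<in>\<sigma> ` C. fscale (f x) x) = (\<Sum>c\<in>C. fscale (f (\<sigma> c)) (\<sigma> c))"
      by (rule sum.reindex_cong[OF inj\<sigma> refl]) simp
    have s2: "(\<Sum>x\<in>\<mu> ` B1. fscale (f x) x) = (\<Sum>b\<in>B1. fscale (f (\<mu> b)) (\<mu> b))"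
      by (rule sum.reindex_cong[OF injB1 refl]) simp
    have "\<rho> (\<Sum>x\<in>T. fscale (f x) x) = 0" using sum0 by simp
    then have "(\<Sum>c\<in>C. fscale (f (\<sigma> c)) (\<rho> (\<sigma> c))) + (\<Sum>b\<in>B1. fscale (f (\<mu> b)) (\<rho> (\<mu> b))) = 0"
      unfolding split s1 s2 r.add r.sum r.scale .
    moreover have "(\<Sum>b\<in>B1. fscale (f (\<mu> b)) (\<rho> (\<mu> b))) = 0"
      using zero B1(1) by (auto intro!: sum.neutral)
    moreover have "(\<Sum>c\<in>C. fscale (f (\<sigma> c)) (\<rho> (\<sigma> c))) = (\<Sum>c\<in>C. fscale (f (\<sigma> c)) c)"
      using \<sigma> by (auto intro!: sum.cong)
    ultimately have "(\<Sum>c\<in>C. fscale (f (\<sigma> c)) c) = 0" by simp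
    then have fC: "\<And>c. c \<in> C \<Longrightarrow> f (\<sigma> c) = 0"
      using fs.independentD[OF C(2) C(5) order_refl, of "\<lambda>c. f (\<sigma> c)"] by blast
    have "(\<Sum>c\<in>C. fscale (f (\<sigma> c)) (\<sigma> c)) = 0" using fC by (auto intro!: sum.neutral)
    with sum0 split s1 s2 have "(\<Sum>b\<in>B1. fscale (f (\<mu> b)) (\<mu> b)) = 0" by simp
    then have "\<mu> (\<Sum>b\<in>B1. fscale (f (\<mu> b)) b) = \<mu> 0" by (simp add: m.sum m.scale)
    moreover have "(\<Sum>b\<in>B1. fscale (f (\<mu> b)) b) \<in> fs.span G'"
      using B1(1) by (auto intro!: fs.span_sum fs.span_scale)
    ultimately have "(\<Sum>b\<in>B1. fscale (f (\<mu> b)) b) = 0"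
      using inj fs.span_zero by (meson inj_onD)
    then have fB: "\<And>b. b \<in> B1 \<Longrightarrow> f (\<mu> b) = 0"
      using fs.independentD[OF B1(2) B1(5) order_refl, of "\<lambda>b. f (\<mu> b)"] by blast
    show "f x = 0" using xT fC fB unfolding T_def by auto
  qed
  have "card T \<le> fs.dim (fs.span G)"
    using indep_card_le_dim[OF indT _ _ G, of "fs.span G"] TG by (simp add: fs.span_span)
  then show ?thesis using cardT C(4) B1(4) by simp
qed

definition monoms :: "('i \<Rightarrow> 'x \<Rightarrow> 'a::field) \<Rightarrow> 'i set \<Rightarrow> nat \<Rightarrow> ('x \<Rightarrow> 'a) set" where
  "monoms c I E = {(\<lambda>x. \<Prod>i\<in>I. c i x ^ a i) | a. \<forall>i\<in>I. a i \<le> E}"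

definition PF :: "('i \<Rightarrow> 'x \<Rightarrow> 'a::field) \<Rightarrow> 'i set \<Rightarrow> nat \<Rightarrow> ('x \<Rightarrow> 'a) set" where
  "PF c I E = fs.span (monoms c I E)"

lemma sum_fun_apply': "(\<Sum>j\<in>J. f j) x = (\<Sum>j\<in>J. f j x)"
  by (induction J rule: infinite_finite_induct) simp_all

lemma prod_fun_apply': "(\<Prod>j\<in>J. f j) x = (\<Prod>j\<in>J. f j x)"
  by (induction J rule: infinite_finite_induct) simp_all

lemma monomsI: "\<forall>i\<in>I. a i \<le> E \<Longrightarrow> (\<lambda>x. \<Prod>i\<in>I. c i x ^ a i) \<in> monoms c I E"
  unfolding monoms_def by blast

lemma monoms_image:
  "monoms c I E = (\<lambda>a. (\<lambda>x. \<Prod>i\<in>I. c i x ^ a i)) ` PiE I (\<lambda>_. {0..E})"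
proof (intro equalityI subsetI)
  fix f assume "f \<in> monoms c I E"
  then obtain a where a: "\<forall>i\<in>I. a i \<le> E" "f = (\<lambda>x. \<Prod>i\<in>I. c i x ^ a i)"
    by (auto simp: monoms_def)
  have "restrict a I \<in> PiE I (\<lambda>_. {0..E})" using a by (auto simp: PiE_def Pi_def)
  moreover have "f = (\<lambda>x. \<Prod>i\<in>I. c i x ^ restrict a I i)" using a by auto
  ultimately show "f \<in> (\<lambda>a. (\<lambda>x. \<Prod>i\<in>I. c i x ^ a i)) ` PiE I (\<lambda>_. {0..E})" by blast
next
  fix f assume "f \<in> (\<lambda>a. (\<lambda>x. \<Prod>i\<in>I. c i x ^ a i)) ` PiE I (\<lambda>_. {0..E})"
  then obtain a where "a \<in> PiE I (\<lambda>_. {0..E})" "f = (\<lambda>x. \<Prod>i\<in>I. c i x ^ a i)" by blast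
  then show "f \<in> monoms c I E" by (auto intro!: monomsI simp: PiE_def Pi_def)
qed

lemma finite_monoms: "finite I \<Longrightarrow> finite (monoms c I E)"
  unfolding monoms_image by (auto intro!: finite_PiE)

lemma card_monoms: "finite I \<Longrightarrow> card (monoms c I E) \<le> (E+1) ^ card I"
proof -
  assume I: "finite I"
  have "card (monoms c I E) \<le> card (PiE I (\<lambda>_. {0..E::nat}))"
    unfolding monoms_image by (rule card_image_le) (rule finite_PiE[OF I], simp)
  also have "\<dots> = (\<Prod>i\<in>I. card {0..E})" using I by (rule card_PiE)
  also have "\<dots> = (E+1) ^ card I" by simp
  finally show ?thesis .
qed

lemma dim_PF: "finite I \<Longrightarrow> fs.dim (PF c I E) \<le> (E+1) ^ card I"
proof -
  assume I: "finite I"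
  have "fs.dim (PF c I E) = fs.dim (monoms c I E)" unfolding PF_def by (rule fs.dim_span)
  also have "\<dots> \<le> card (monoms c I E)" by (rule fs.dim_le_card'[OF finite_monoms[OF I]])
  also have "\<dots> \<le> (E+1) ^ card I" by (rule card_monoms[OF I])
  finally show ?thesis .
qed

lemma monoms_mono: "E \<le> F \<Longrightarrow> monoms c I E \<subseteq> monoms c I F"
  unfolding monoms_def by (smt (verit) Collect_mono order_trans)

lemma PF_mono: "E \<le> F \<Longrightarrow> PF c I E \<subseteq> PF c I F"
  unfolding PF_def by (intro fs.span_mono monoms_mono)

lemma mult_lin: "module_hom fscale fscale (\<lambda>f. (\<lambda>x. f x * g x) :: 'x \<Rightarrow> 'a::field)"
  by (rule linI) (auto simp: fun_eq_iff algebra_simps)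

lemma monoms_mult:
  assumes "f \<in> monoms c I E" "g \<in> monoms c I F"
  shows "(\<lambda>x. f x * g x) \<in> monoms c I (E+F)"
proof -
  obtain a where a: "\<forall>i\<in>I. a i \<le> E" "f = (\<lambda>x. \<Prod>i\<in>I. c i x ^ a i)"
    using assms(1) by (auto simp: monoms_def)
  obtain b where b: "\<forall>i\<in>I. b i \<le> F" "g = (\<lambda>x. \<Prod>i\<in>I. c i x ^ b i)"
    using assms(2) by (auto simp: monoms_def)
  have "(\<lambda>x. f x * g x) = (\<lambda>x. \<Prod>i\<in>I. c i x ^ (a i + b i))"
    unfolding a b by (simp add: power_add prod.distrib)
  moreover have "\<forall>i\<in>I. a i + b i \<le> E + F" using a b by (simp add: add_mono)
  ultimately show ?thesis using monomsI[of I "\<lambda>i. a i + b i"] by simp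
qed

lemma PF_mult:
  assumes f: "f \<in> PF c I E" and g: "g \<in> PF c I F"
  shows "(\<lambda>x. f x * g x) \<in> PF c I (E+F)"
proof -
  have 1: "(\<lambda>x. f x * h x) \<in> PF c I (E+F)" if h: "h \<in> monoms c I F" for h
  proof -
    interpret m: module_hom fscale fscale "(\<lambda>f. (\<lambda>x. f x * h x))" by (rule mult_lin)
    have "(\<lambda>x. f x * h x) \<in> (\<lambda>f. (\<lambda>x. f x * h x)) ` fs.span (monoms c I E)"
      using f unfolding PF_def by blast
    also have "\<dots> = fs.span ((\<lambda>f. (\<lambda>x. f x * h x)) ` monoms c I E)"
      by (simp add: m.span_image)
    also have "\<dots> \<subseteq> PF c I (E+F)"
      unfolding PF_def by (intro fs.span_mono) (use monoms_mult h in blast)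
    finally show ?thesis .
  qed
  interpret m: module_hom fscale fscale "(\<lambda>g. (\<lambda>x. f x * g x))"
    by (rule linI) (auto simp: fun_eq_iff algebra_simps)
  have "(\<lambda>x. f x * g x) \<in> (\<lambda>g. (\<lambda>x. f x * g x)) ` fs.span (monoms c I F)"
    using g unfolding PF_def by blast
  also have "\<dots> = fs.span ((\<lambda>g. (\<lambda>x. f x * g x)) ` monoms c I F)"
    by (simp add: m.span_image)
  also have "\<dots> \<subseteq> PF c I (E+F)"
    using 1 unfolding PF_def by (intro fs.span_minimal) (auto simp: image_subset_iff)
  finally show ?thesis .
qed

lemma PF_const: "(\<lambda>x. k) \<in> PF c I E"
proof -
  have "(\<lambda>x. 1) \<in> monoms c I E"
    using monomsI[of I "\<lambda>_. 0" E c] by simp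
  then have "fscale k (\<lambda>x. 1) \<in> PF c I E" unfolding PF_def
    by (intro fs.span_scale fs.span_base)
  then show ?thesis by (simp add: fscale_def)
qed

lemma PF_coord: assumes "i \<in> I" "finite I" shows "c i \<in> PF c I 1"
proof -
  have "(\<lambda>x. \<Prod>j\<in>I. c j x ^ (if j = i then 1 else 0)) = c i"
  proof
    fix x
    have "(\<Prod>j\<in>I. c j x ^ (if j = i then 1 else 0)) = (\<Prod>j\<in>I. if j = i then c j x else 1)"
      by (intro prod.cong) auto
    also have "\<dots> = c i x" using assms by (simp add: prod.delta)
    finally show "(\<Prod>j\<in>I. c j x ^ (if j = i then 1 else 0)) = c i x" .
  qed
  moreover have "(\<lambda>x. \<Prod>j\<in>I. c j x ^ (if j = i then 1 else 0)) \<in> monoms c I 1"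
    by (rule monomsI) auto
  ultimately show ?thesis unfolding PF_def by (metis fs.span_base)
qed

lemma PF_add: "f \<in> PF c I E \<Longrightarrow> g \<in> PF c I E \<Longrightarrow> (\<lambda>x. f x + g x) \<in> PF c I E"
  unfolding PF_def using fs.span_add[of f _ g] by (simp add: plus_fun_def)

lemma PF_scale: "f \<in> PF c I E \<Longrightarrow> (\<lambda>x. k * f x) \<in> PF c I E"
  unfolding PF_def using fs.span_scale[of f _ k] by (simp add: fscale_def)

lemma PF_sum: "(\<And>j. j \<in> J \<Longrightarrow> f j \<in> PF c I E) \<Longrightarrow> (\<lambda>x. \<Sum>j\<in>J. f j x) \<in> PF c I E"
proof -
  assume "\<And>j. j \<in> J \<Longrightarrow> f j \<in> PF c I E"
  then have "(\<Sum>j\<in>J. f j) \<in> PF c I E" unfolding PF_def by (rule fs.span_sum)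
  moreover have "(\<Sum>j\<in>J. f j) = (\<lambda>x. \<Sum>j\<in>J. f j x)"
    by (rule ext, rule sum_fun_apply')
  ultimately show ?thesis by simp
qed

lemma PF_prod:
  assumes "finite J" "\<And>j. j \<in> J \<Longrightarrow> f j \<in> PF c I (e j)"
  shows "(\<lambda>x. \<Prod>j\<in>J. f j x) \<in> PF c I (\<Sum>j\<in>J. e j)"
  using assms
proof (induction J rule: finite_induct)
  case empty then show ?case using PF_const[of 1] by simp
next
  case (insert j J)
  have "(\<lambda>x. f j x * (\<Prod>j\<in>J. f j x)) \<in> PF c I (e j + (\<Sum>j\<in>J. e j))"
    using insert by (intro PF_mult) auto
  then show ?case using insert by simp
qed

lemma PF_power:
  assumes "f \<in> PF c I E" shows "(\<lambda>x. f x ^ k) \<in> PF c I (k * E)"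
proof (induction k)
  case 0 then show ?case using PF_const[of 1] by simp
next
  case (Suc k)
  have "(\<lambda>x. f x * f x ^ k) \<in> PF c I (E + k * E)" using PF_mult[OF assms Suc] .
  then show ?case by simp
qed

definition cm :: "nat list \<times> nat list \<Rightarrow> (nat list \<Rightarrow> nat list \<Rightarrow> 'a) \<Rightarrow> 'a" where
  "cm v M = M (fst v) (snd v)"

definition mterm :: "((nat list \<times> nat list) \<Rightarrow>\<^sub>0 nat) \<Rightarrow> (nat list \<Rightarrow> nat list \<Rightarrow> 'a::comm_ring_1) \<Rightarrow> 'a" where
  "mterm m M = (\<Prod>v \<in> Poly_Mapping.keys m. M (fst v) (snd v) ^ Poly_Mapping.lookup m v)"

lemma mpeval_alt:
  assumes "finite S" "Poly_Mapping.keys p \<subseteq> S"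
  shows "mpeval p M = (\<Sum>m\<in>S. Poly_Mapping.lookup p m * mterm m M)"
  unfolding mpeval_def mterm_def
  by (rule sum.mono_neutral_left) (use assms in \<open>auto simp: in_keys_iff\<close>)

lemma finite_idx: "finite (idx_set n d)"
proof -
  have "idx_set n d \<subseteq> {xs. set xs \<subseteq> {0..<n} \<and> length xs = d}"
    unfolding idx_set_def by (auto simp: in_set_conv_nth)
  moreover have "finite {xs. set xs \<subseteq> {0..<n} \<and> length xs = d}"
    by (rule finite_lists_length_eq) simp
  ultimately show ?thesis by (rule finite_subset)
qed

lemma mpeval_PF:
  fixes p :: "'a::field mpoly"
  shows "\<exists>E f. f \<in> PF cm (idx_set n d \<times> idx_set n d) E \<and> (\<forall>M\<in>mats n d. mpeval p M = f M)"
proof -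
  let ?V = "idx_set n d \<times> idx_set n d"
  have finV: "finite ?V" using finite_idx by simp
  define E where "E = (\<Sum>m\<in>Poly_Mapping.keys p. \<Sum>v\<in>Poly_Mapping.keys m. Poly_Mapping.lookup m v)"
  define g where "g m = (if Poly_Mapping.keys m \<subseteq> ?V
      then (\<lambda>M. Poly_Mapping.lookup p m * (\<Prod>v\<in>?V. cm v M ^ Poly_Mapping.lookup m v)) else (\<lambda>M. 0))"
    for m :: "(nat list \<times> nat list) \<Rightarrow>\<^sub>0 nat"
  define f where "f = (\<lambda>M. \<Sum>m\<in>Poly_Mapping.keys p. g m M)"
  have "f \<in> PF cm ?V E"
    unfolding f_def
  proof (rule PF_sum)
    fix m assume m: "m \<in> Poly_Mapping.keys p"
    have le: "\<forall>v\<in>?V. Poly_Mapping.lookup m v \<le> E"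
    proof
      fix v
      show "Poly_Mapping.lookup m v \<le> E"
      proof (cases "v \<in> Poly_Mapping.keys m")
        case True
        have "Poly_Mapping.lookup m v \<le> (\<Sum>v\<in>Poly_Mapping.keys m. Poly_Mapping.lookup m v)"
          by (rule member_le_sum) (use True in auto)
        also have "\<dots> \<le> E" unfolding E_def
          by (rule member_le_sum[where f = "\<lambda>m. \<Sum>v\<in>Poly_Mapping.keys m. Poly_Mapping.lookup m v"]) (use m in auto)
        finally show ?thesis .
      next
        case False then show ?thesis by (simp add: in_keys_iff)
      qed
    qed
    show "g m \<in> PF cm ?V E"
    proof (cases "Poly_Mapping.keys m \<subseteq> ?V")
      case True
      have "(\<lambda>M. \<Prod>v\<in>?V. cm v M ^ Poly_Mapping.lookup m v) \<in> PF cm ?V E"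
        unfolding PF_def by (rule fs.span_base, rule monomsI[OF le])
      from PF_scale[OF this, of "Poly_Mapping.lookup p m"] show ?thesis using True unfolding g_def by simp
    next
      case False then show ?thesis unfolding g_def using PF_const[of 0] by simp
    qed
  qed
  moreover have "\<forall>M\<in>mats n d. mpeval p M = f M"
  proof
    fix M :: "nat list \<Rightarrow> nat list \<Rightarrow> 'a" assume M: "M \<in> mats n d"
    have "mpeval p M = (\<Sum>m\<in>Poly_Mapping.keys p. Poly_Mapping.lookup p m * mterm m M)"
      by (rule mpeval_alt) auto
    also have "\<dots> = f M" unfolding f_def
    proof (rule sum.cong[OF refl])
      fix m assume m: "m \<in> Poly_Mapping.keys p"
      show "Poly_Mapping.lookup p m * mterm m M = g m M"
      proof (cases "Poly_Mapping.keys m \<subseteq> ?V")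
        case True
        have "mterm m M = (\<Prod>v\<in>?V. cm v M ^ Poly_Mapping.lookup m v)"
          unfolding mterm_def cm_def
          by (rule prod.mono_neutral_left) (use True finV in \<open>auto simp: in_keys_iff\<close>)
        then show ?thesis using True unfolding g_def by simp
      next
        case False
        then obtain v where v: "v \<in> Poly_Mapping.keys m" "v \<notin> ?V" by auto
        have "M (fst v) (snd v) = 0" using M v(2) unfolding mats_def by (cases v) auto
        then have "M (fst v) (snd v) ^ Poly_Mapping.lookup m v = 0"
          using v(1) by (simp add: in_keys_iff)
        then have "\<exists>a\<in>Poly_Mapping.keys m. M (fst a) (snd a) ^ Poly_Mapping.lookup m a = 0"
          using v(1) by blast
        then have "mterm m M = 0" unfolding mterm_def by (rule prod_zero[OF finite_keys])
        then show ?thesis using False unfolding g_def by simp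
      qed
    qed
    finally show "mpeval p M = f M" .
  qed
  ultimately show ?thesis by blast
qed

lemma PF_mpeval:
  fixes f :: "(nat list \<Rightarrow> nat list \<Rightarrow> 'a::field) \<Rightarrow> 'a"
  assumes f: "f \<in> PF cm V E" and finV: "finite V"
  shows "\<exists>p. \<forall>M. mpeval p M = f M"
proof -
  let ?P = "\<lambda>f :: (nat list \<Rightarrow> nat list \<Rightarrow> 'a) \<Rightarrow> 'a. \<exists>p. \<forall>M. mpeval p M = f M"
  have sub: "fs.subspace (Collect ?P)"
    unfolding fs.subspace_def
  proof (intro conjI ballI allI)
    show "0 \<in> Collect ?P" by (auto intro!: exI[of _ 0] simp: mpeval_def)
  next
    fix x y assume "x \<in> Collect ?P" "y \<in> Collect ?P"
    then obtain p q where p: "\<forall>M. mpeval p M = x M" and q: "\<forall>M. mpeval q M = y M" by auto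
    have "\<forall>M. mpeval (p + q) M = (x + y) M"
    proof
      fix M
      let ?S = "Poly_Mapping.keys p \<union> Poly_Mapping.keys q"
      have "mpeval (p + q) M = (\<Sum>m\<in>?S. Poly_Mapping.lookup (p + q) m * mterm m M)"
        by (rule mpeval_alt) (auto dest: keys_add[THEN subsetD])
      also have "\<dots> = (\<Sum>m\<in>?S. Poly_Mapping.lookup p m * mterm m M) + (\<Sum>m\<in>?S. Poly_Mapping.lookup q m * mterm m M)"
        by (simp add: lookup_add distrib_right sum.distrib)
      also have "\<dots> = mpeval p M + mpeval q M"
        by (subst (1 2) mpeval_alt[of ?S]) auto
      finally show "mpeval (p + q) M = (x + y) M" using p q by simp
    qed
    then show "x + y \<in> Collect ?P" by blast
  next
    fix c :: 'a and x assume "x \<in> Collect ?P"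
    then obtain p where p: "\<forall>M. mpeval p M = x M" by auto
    define p' where "p' = Abs_poly_mapping (\<lambda>m. c * Poly_Mapping.lookup p m)"
    have fin: "finite {m. c * Poly_Mapping.lookup p m \<noteq> 0}"
      by (rule finite_subset[of _ "Poly_Mapping.keys p"]) (auto simp: in_keys_iff)
    have lp': "Poly_Mapping.lookup p' = (\<lambda>m. c * Poly_Mapping.lookup p m)"
      unfolding p'_def using fin by simp
    have kp': "Poly_Mapping.keys p' \<subseteq> Poly_Mapping.keys p"
      by (auto simp: in_keys_iff lp')
    have "\<forall>M. mpeval p' M = fscale c x M"
    proof
      fix M
      have "mpeval p' M = (\<Sum>m\<in>Poly_Mapping.keys p. Poly_Mapping.lookup p' m * mterm m M)"
        by (rule mpeval_alt) (use kp' in auto)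
      also have "\<dots> = c * (\<Sum>m\<in>Poly_Mapping.keys p. Poly_Mapping.lookup p m * mterm m M)"
        by (simp add: lp' sum_distrib_left mult.assoc)
      also have "\<dots> = c * mpeval p M" by (subst mpeval_alt[of "Poly_Mapping.keys p"]) auto
      finally show "mpeval p' M = fscale c x M" using p by simp
    qed
    then show "fscale c x \<in> Collect ?P" by blast
  qed
  have mon: "?P g" if g: "g \<in> monoms cm V E" for g
  proof -
    obtain a where a: "g = (\<lambda>M. \<Prod>v\<in>V. cm v M ^ a v)"
      using g unfolding monoms_def by auto
    define m where "m = Abs_poly_mapping (\<lambda>v. if v \<in> V then a v else 0)"
    have finm: "finite {v. (if v \<in> V then a v else 0) \<noteq> 0}"
      by (rule finite_subset[OF _ finV]) auto
    have lm: "Poly_Mapping.lookup m = (\<lambda>v. if v \<in> V then a v else 0)"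
      unfolding m_def using finm by simp
    have km: "Poly_Mapping.keys m \<subseteq> V" by (auto simp: in_keys_iff lm split: if_splits)
    have "\<forall>M. mpeval (Poly_Mapping.single m (1::'a)) M = g M"
    proof
      fix M :: "nat list \<Rightarrow> nat list \<Rightarrow> 'a"
      have "mpeval (Poly_Mapping.single m (1::'a)) M = mterm m M"
        unfolding mpeval_def mterm_def by simp
      also have "\<dots> = (\<Prod>v\<in>V. cm v M ^ Poly_Mapping.lookup m v)"
        unfolding mterm_def cm_def
        by (rule prod.mono_neutral_left) (use km finV in \<open>auto simp: in_keys_iff\<close>)
      also have "\<dots> = g M" unfolding a by (auto simp: lm intro!: prod.cong)
      finally show "mpeval (Poly_Mapping.single m (1::'a)) M = g M" .
    qed
    then show ?thesis by blast
  qed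
  show ?thesis
    using fs.span_induct[OF f[unfolded PF_def] sub] mon by blast
qed

definition outer :: "nat \<Rightarrow> nat \<Rightarrow> (nat list \<Rightarrow> 'a::field) \<Rightarrow> (nat list \<Rightarrow> 'a) \<Rightarrow> (nat list \<Rightarrow> nat list \<Rightarrow> 'a)" where
  "outer n d u v = (\<lambda>i j. if i \<in> idx_set n d \<and> j \<in> idx_set n d then u i * v j else 0)"

definition phi :: "nat \<Rightarrow> nat \<Rightarrow> nat \<Rightarrow> (nat \<Rightarrow> nat set) \<Rightarrow> (nat \<Rightarrow> nat list \<Rightarrow> 'a::field)
    \<Rightarrow> (nat \<Rightarrow> nat list \<Rightarrow> 'a) \<Rightarrow> (nat list \<Rightarrow> nat list \<Rightarrow> 'a)" where
  "phi n d R K u v = (\<Sum>t<R. ptrans n d (K t) (outer n d (u t) (v t)))"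

definition Pat :: "nat \<Rightarrow> nat \<Rightarrow> (nat \<Rightarrow> nat set) set" where
  "Pat R d = PiE {0..<R} (\<lambda>_. Pow {0..<d})"

definition Par :: "nat \<Rightarrow> nat \<Rightarrow> nat \<Rightarrow> (nat \<Rightarrow> nat list \<Rightarrow> 'a) set" where
  "Par R n d = PiE {0..<R} (\<lambda>_. PiE (idx_set n d) (\<lambda>_. UNIV))"

lemma mix_length[simp]: "length (mix K a b) = length b"
  by (simp add: mix_def)

lemma mix_nth: "k < length b \<Longrightarrow> mix K a b ! k = (if k \<in> K then a ! k else b ! k)"
  by (simp add: mix_def)

lemma mix_idx: "i \<in> idx_set n d \<Longrightarrow> j \<in> idx_set n d \<Longrightarrow> mix K j i \<in> idx_set n d"
  by (simp add: idx_set_def mix_nth)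

lemma mix_inv: "length i = length j \<Longrightarrow> mix K (mix K i j) (mix K j i) = i"
  by (rule nth_equalityI) (auto simp: mix_nth)

lemma mix_empty[simp]: "mix {} a b = b"
  by (rule nth_equalityI) (auto simp: mix_nth)

lemma ptrans_mats: "ptrans n d K A \<in> mats n d"
  by (auto simp: ptrans_def mats_def)

lemma ptrans_ptrans:
  assumes "A \<in> mats n d" shows "ptrans n d K (ptrans n d K A) = A"
proof (intro ext)
  fix i j
  show "ptrans n d K (ptrans n d K A) i j = A i j"
  proof (cases "i \<in> idx_set n d \<and> j \<in> idx_set n d")
    case True
    then have l: "length i = length j" by (simp add: idx_set_def)
    have "ptrans n d K (ptrans n d K A) i j = A (mix K (mix K i j) (mix K j i)) (mix K (mix K j i) (mix K i j))"
      using True by (simp add: ptrans_def mix_idx)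
    also have "\<dots> = A i j" using l by (simp add: mix_inv)
    finally show ?thesis .
  next
    case False then show ?thesis using assms by (auto simp: ptrans_def mats_def)
  qed
qed

lemma ptrans_empty: "A \<in> mats n d \<Longrightarrow> ptrans n d {} A = A"
  by (auto simp: ptrans_def mats_def fun_eq_iff)

lemma ptrans_zero[simp]: "ptrans n d K 0 = 0"
  by (auto simp: ptrans_def fun_eq_iff)

lemma outer_mats: "outer n d u v \<in> mats n d"
  by (auto simp: outer_def mats_def)

lemma outer_restrict1: "outer n d (restrict u (idx_set n d)) v = outer n d u v"
  by (auto simp: outer_def fun_eq_iff)

lemma outer_restrict2: "outer n d u (restrict v (idx_set n d)) = outer n d u v"
  by (auto simp: outer_def fun_eq_iff)

lemma outer_zero: "outer n d (\<lambda>_. 0) v = 0"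
  by (auto simp: outer_def fun_eq_iff)

lemma rank1_outer:
  fixes B :: "nat list \<Rightarrow> nat list \<Rightarrow> 'a::field"
  assumes B: "B \<in> mats n d" and r: "mrank n d B = 1"
  shows "\<exists>u v. B = outer n d u v"
proof -
  let ?C = "(\<lambda>j. (\<lambda>i. B i j)) ` idx_set n d"
  obtain Bs where Bs: "Bs \<subseteq> ?C" "fs.independent Bs" "?C \<subseteq> fs.span Bs" "card Bs = fs.dim ?C"
    using fs.basis_exists by blast
  have "card Bs = 1" using Bs(4) r by (simp add: mrank_def)
  then obtain b where b: "Bs = {b}" by (rule card_1_singletonE)
  have "\<forall>j\<in>idx_set n d. \<exists>k. (\<lambda>i. B i j) = fscale k b"
    using Bs(3) unfolding b fs.span_singleton by auto
  then obtain lam where lam: "\<And>j. j \<in> idx_set n d \<Longrightarrow> (\<lambda>i. B i j) = fscale (lam j) b" by metis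
  have "B = outer n d b lam"
  proof (intro ext)
    fix i j
    show "B i j = outer n d b lam i j"
    proof (cases "i \<in> idx_set n d \<and> j \<in> idx_set n d")
      case True
      have "B i j = lam j * b i" using lam[of j] True by (metis fscale_apply)
      then show ?thesis using True by (simp add: outer_def mult.commute)
    next
      case False then show ?thesis using B by (auto simp: outer_def mats_def)
    qed
  qed
  then show ?thesis by blast
qed

lemma elem_basic:
  fixes c :: "'a::field"
  assumes ij: "i \<in> idx_set n d" "j \<in> idx_set n d" and c: "c \<noteq> 0"
  shows "pt_basic n d (\<lambda>a b. if (a, b) = (i, j) then c else 0)"
proof -
  let ?E = "(\<lambda>a b. if (a, b) = (i, j) then c else 0)"
  have E: "?E \<in> mats n d" using ij by (auto simp: mats_def)
  let ?w = "(\<lambda>a. if a = i then c else 0)"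
  let ?C = "(\<lambda>j'. (\<lambda>a. ?E a j')) ` idx_set n d"
  have C1: "?C \<subseteq> {0, ?w}" by (auto simp: fun_eq_iff)
  have C2: "?w \<in> ?C" using ij by (auto simp: fun_eq_iff intro!: image_eqI[of _ _ j])
  have "fs.span ?C = fs.span {?w}"
  proof
    show "fs.span ?C \<subseteq> fs.span {?w}"
      using fs.span_mono[OF C1] by simp
    show "fs.span {?w} \<subseteq> fs.span ?C"
      using C2 by (intro fs.span_mono) auto
  qed
  then have "fs.dim ?C = fs.dim {?w}" by (rule fs.span_eq_dim)
  also have "\<dots> = 1"
  proof -
    have "?w \<noteq> 0" using c by (auto simp: fun_eq_iff)
    then have "fs.independent {?w}" by simp
    then show ?thesis by (simp add: fs.dim_eq_card_independent)
  qed
  finally have "mrank n d ?E = 1" by (simp add: mrank_def)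
  then show ?thesis using E ptrans_empty[OF E] unfolding pt_basic_def by auto
qed

lemma decomp_exists:
  fixes M :: "nat list \<Rightarrow> nat list \<Rightarrow> 'a::field"
  assumes M: "M \<in> mats n d"
  shows "\<exists>Ms. (\<forall>A\<in>set Ms. pt_basic n d A) \<and> M = sum_list Ms"
proof -
  define T where "T = {t \<in> idx_set n d \<times> idx_set n d. M (fst t) (snd t) \<noteq> 0}"
  have finT: "finite T"
  proof (rule finite_subset)
    show "T \<subseteq> idx_set n d \<times> idx_set n d" unfolding T_def by blast
    show "finite (idx_set n d \<times> idx_set n d)" using finite_idx[of n d] by blast
  qed
  define F where "F t = (\<lambda>a b. if (a, b) = t then M (fst t) (snd t) else 0)" for t
  obtain xs where xs: "set xs = T" "distinct xs" using finite_distinct_list[OF finT] by blast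
  have "sum_list (map F xs) = sum F T" using sum_list_distinct_conv_sum_set[OF xs(2), of F] xs(1) by simp
  also have "\<dots> = M"
  proof (intro ext)
    fix a b
    have "sum F T a b = (\<Sum>t\<in>T. F t a b)" by (simp only: sum_fun_apply')
    also have "\<dots> = (\<Sum>t\<in>T. if (a, b) = t then M a b else 0)"
      by (intro sum.cong refl) (auto simp: F_def)
    also have "\<dots> = (if (a, b) \<in> T then M a b else 0)"
      using finT by (rule sum.delta')
    also have "\<dots> = M a b"
    proof (cases "(a, b) \<in> T")
      case False
      then have "M a b = 0" using M unfolding T_def mats_def by auto
      then show ?thesis by simp
    qed simp
    finally show "sum F T a b = M a b" .
  qed
  finally have "M = sum_list (map F xs)" by simp
  moreover have "\<forall>A\<in>set (map F xs). pt_basic n d A"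
  proof
    fix A assume "A \<in> set (map F xs)"
    then obtain t where t: "t \<in> T" "A = F t" using xs by auto
    then obtain i j where "t = (i, j)" "i \<in> idx_set n d" "j \<in> idx_set n d" "M i j \<noteq> 0"
      unfolding T_def by auto
    then show "pt_basic n d A" using t elem_basic[of i n d j "M i j"] by (simp add: F_def cong: if_cong)
  qed
  ultimately show ?thesis by blast
qed

lemma basic_form:
  fixes A :: "nat list \<Rightarrow> nat list \<Rightarrow> 'a::field"
  assumes "pt_basic n d A"
  shows "\<exists>K u v. K \<subseteq> {0..<d} \<and> A = ptrans n d K (outer n d u v)"
proof -
  obtain K where K: "K \<subseteq> {0..<d}" "mrank n d (ptrans n d K A) = 1" and A: "A \<in> mats n d"
    using assms unfolding pt_basic_def by blast
  obtain u v where "ptrans n d K A = outer n d u v" using rank1_outer[OF ptrans_mats K(2)] by blast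
  then have "A = ptrans n d K (outer n d u v)" using ptrans_ptrans[OF A, of K] by simp
  then show ?thesis using K by blast
qed

lemma low_rank_param:
  fixes M :: "nat list \<Rightarrow> nat list \<Rightarrow> 'a::field"
  assumes M: "M \<in> mats n d" and r: "pt_rank n d M \<le> R"
  shows "\<exists>K u v. K \<in> Pat R d \<and> u \<in> Par R n d \<and> v \<in> Par R n d \<and> M = phi n d R K u v"
proof -
  let ?P = "\<lambda>r. \<exists>Ms. length Ms = r \<and> (\<forall>A \<in> set Ms. pt_basic n d A) \<and> M = sum_list Ms"
  have ex: "\<exists>r. ?P r" using decomp_exists[OF M] by blast
  then obtain Ms where Ms: "length Ms = pt_rank n d M" "\<forall>A \<in> set Ms. pt_basic n d A" "M = sum_list Ms"
    using LeastI_ex[OF ex] unfolding pt_rank_def by blast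
  let ?s = "length Ms"
  have "\<forall>t<?s. \<exists>K u v. K \<subseteq> {0..<d} \<and> Ms ! t = ptrans n d K (outer n d u v)"
    using Ms(2) basic_form by (metis nth_mem)
  then obtain K u v where Kuv: "\<And>t. t < ?s \<Longrightarrow> K t \<subseteq> {0..<d} \<and> Ms ! t = ptrans n d (K t) (outer n d (u t) (v t))"
    by metis
  define K' where "K' t = (if t < R then (if t < ?s then K t else {}) else undefined)" for t
  define u' where "u' t = (if t < R then (if t < ?s then restrict (u t) (idx_set n d) else restrict (\<lambda>_. 0) (idx_set n d)) else undefined)" for t
  define v' where "v' t = (if t < R then (if t < ?s then restrict (v t) (idx_set n d) else restrict (\<lambda>_. 0) (idx_set n d)) else undefined)" for t
  have sR: "?s \<le> R" using Ms(1) r by simp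
  have "K' \<in> Pat R d" using Kuv by (auto simp: Pat_def K'_def PiE_def Pi_def extensional_def)
  moreover have "u' \<in> Par R n d" by (auto simp: Par_def u'_def PiE_def Pi_def extensional_def)
  moreover have "v' \<in> Par R n d" by (auto simp: Par_def v'_def PiE_def Pi_def extensional_def)
  moreover have "M = phi n d R K' u' v'"
  proof -
    have "phi n d R K' u' v' = (\<Sum>t<R. if t < ?s then Ms ! t else 0)"
      unfolding phi_def
    proof (intro sum.cong refl)
      fix t assume t: "t \<in> {..<R}"
      show "ptrans n d (K' t) (outer n d (u' t) (v' t)) = (if t < ?s then Ms ! t else 0)"
      proof (cases "t < ?s")
        case True then show ?thesis using t Kuv[of t]
          by (simp add: K'_def u'_def v'_def outer_restrict1 outer_restrict2)
      next
        case False then show ?thesis using t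
          by (simp add: K'_def u'_def v'_def outer_restrict1 outer_restrict2 outer_zero)
      qed
    qed
    also have "\<dots> = (\<Sum>t<?s. Ms ! t)"
      by (rule sum.mono_neutral_cong_right) (use sR in auto)
    also have "\<dots> = sum_list Ms" by (simp add: sum_list_sum_nth atLeast0LessThan)
    finally show ?thesis using Ms(3) by simp
  qed
  ultimately show ?thesis by blast
qed

definition res :: "'x set \<Rightarrow> ('x \<Rightarrow> 'a::field) \<Rightarrow> ('x \<Rightarrow> 'a)" where
  "res X g = (\<lambda>x. if x \<in> X then g x else 0)"

definition VV :: "nat \<Rightarrow> nat \<Rightarrow> (nat list \<times> nat list) set" where
  "VV n d = idx_set n d \<times> idx_set n d"

definition hdim :: "nat \<Rightarrow> nat \<Rightarrow> (nat list \<Rightarrow> nat list \<Rightarrow> 'a::field) set \<Rightarrow> nat \<Rightarrow> nat" where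
  "hdim n d X D = fs.dim (res X ` PF cm (VV n d) D)"

lemma finite_VV: "finite (VV n d)"
  unfolding VV_def using finite_idx by blast

lemma res_lin: "module_hom fscale fscale (res X)"
  by (rule linI) (auto simp: res_def fun_eq_iff)

lemma res_res: "Y \<subseteq> X \<Longrightarrow> res Y (res X g) = res Y g"
  by (auto simp: res_def fun_eq_iff)

lemma res_PF: "res X ` PF c I D = fs.span (res X ` monoms c I D)"
proof -
  interpret r: module_hom fscale fscale "res X" by (rule res_lin)
  show ?thesis unfolding PF_def by (simp add: r.span_image)
qed

lemma res_PF_fin: "finite I \<Longrightarrow> finite (res X ` monoms c I D)"
  using finite_monoms by blast

lemma hd_mono_D:
  assumes "D \<le> D'" shows "hdim n d X D \<le> hdim n d X D'"
  unfolding hdim_def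
proof (rule dim_mono_fin)
  show "res X ` PF cm (VV n d) D \<subseteq> fs.span (res X ` PF cm (VV n d) D')"
    using PF_mono[OF assms] fs.span_superset by blast
  show "res X ` PF cm (VV n d) D' \<subseteq> fs.span (res X ` monoms cm (VV n d) D')"
    by (simp add: res_PF)
  show "finite (res X ` monoms cm (VV n d) D')" using finite_VV by (rule res_PF_fin)
qed

lemma hd_mono_X:
  assumes "Y \<subseteq> X" shows "hdim n d Y D \<le> hdim n d X D"
proof -
  have "res Y ` PF cm (VV n d) D = res Y ` (res X ` PF cm (VV n d) D)"
    by (simp only: image_image res_res[OF assms])
  then have "hdim n d Y D = fs.dim (res Y ` (res X ` PF cm (VV n d) D))" by (simp add: hdim_def)
  also have "\<dots> \<le> fs.dim (res X ` PF cm (VV n d) D)"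
    by (rule dim_image_le_fin[OF res_lin, of _ "res X ` monoms cm (VV n d) D"])
       (simp_all add: res_PF res_PF_fin finite_VV)
  finally show ?thesis by (simp add: hdim_def)
qed

lemma hd_pos:
  assumes "X \<noteq> {}" shows "1 \<le> hdim n d X D"
proof -
  let ?w = "res X (\<lambda>_. 1)"
  have w: "?w \<in> res X ` PF cm (VV n d) D" using PF_const by blast
  have "?w \<noteq> 0" using assms by (auto simp: res_def fun_eq_iff)
  then have ind: "fs.independent {?w}" by simp
  have s1: "{?w} \<subseteq> fs.span (res X ` PF cm (VV n d) D)" using fs.span_base[OF w] by simp
  have s2: "res X ` PF cm (VV n d) D \<subseteq> fs.span (res X ` monoms cm (VV n d) D)"
    by (simp add: res_PF)
  have "card {?w} \<le> fs.dim (res X ` PF cm (VV n d) D)"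
    using indep_card_le_dim[OF ind s1 s2 res_PF_fin[OF finite_VV]] by simp
  then show ?thesis by (simp add: hdim_def)
qed

lemma zclosed_sub_mats: "zclosed n d X \<Longrightarrow> X \<subseteq> mats n d"
  by (auto simp: zclosed_def zvanish_def)

lemma hd_step:
  fixes X Y :: "(nat list \<Rightarrow> nat list \<Rightarrow> 'a::field) set"
  assumes irr: "zirreducible n d X" and Yc: "zclosed n d Y" and YX: "Y \<subset> X"
  shows "\<exists>e\<ge>1. \<forall>D\<ge>e. hdim n d Y D + hdim n d X (D - e) \<le> hdim n d X D"
proof -
  obtain PX where PX: "X = zvanish n d PX" using irr unfolding zirreducible_def zclosed_def by blast
  obtain PY where PY: "Y = zvanish n d PY" using Yc unfolding zclosed_def by blast
  have Xm: "X \<subseteq> mats n d" using PX by (auto simp: zvanish_def)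
  obtain x where x: "x \<in> X" "x \<notin> Y" using YX by blast
  then obtain p where p: "p \<in> PY" "mpeval p x \<noteq> 0" using Xm PY by (auto simp: zvanish_def)
  obtain E0 f where f: "f \<in> PF cm (idx_set n d \<times> idx_set n d) E0" "\<forall>M\<in>mats n d. mpeval p M = f M"
    using mpeval_PF[where p=p and n=n and d=d] by blast
  define e where "e = max E0 1"
  have fe: "f \<in> PF cm (VV n d) e" using PF_mono[of E0 e] f(1) by (auto simp: e_def VV_def)
  have fY: "\<And>z. z \<in> Y \<Longrightarrow> f z = 0" using f(2) p(1) PY by (auto simp: zvanish_def)
  have fx: "f x \<noteq> 0" using f(2) p(2) x(1) Xm by auto
  have main: "hdim n d Y D + hdim n d X (D - e) \<le> hdim n d X D" if De: "D \<ge> e" for D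
  proof -
    let ?G = "res X ` monoms cm (VV n d) D"
    let ?G' = "res X ` monoms cm (VV n d) (D - e)"
    let ?\<mu> = "\<lambda>g :: (nat list \<Rightarrow> nat list \<Rightarrow> 'a) \<Rightarrow> 'a. (\<lambda>z. f z * g z)"
    have l\<mu>: "module_hom fscale fscale ?\<mu>" by (rule linI) (auto simp: fun_eq_iff algebra_simps)
    interpret mu: module_hom fscale fscale ?\<mu> by (rule l\<mu>)
    have sG: "fs.span ?G = res X ` PF cm (VV n d) D" by (simp add: res_PF)
    have sG': "fs.span ?G' = res X ` PF cm (VV n d) (D - e)" by (simp add: res_PF)
    have mu_res: "?\<mu> (res X g) = res X (?\<mu> g)" for g by (auto simp: res_def fun_eq_iff)
    have sub: "?\<mu> ` fs.span ?G' \<subseteq> fs.span ?G"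
    proof
      fix y assume "y \<in> ?\<mu> ` fs.span ?G'"
      then obtain g where g: "g \<in> PF cm (VV n d) (D - e)" "y = ?\<mu> (res X g)" using sG' by auto
      have "?\<mu> g \<in> PF cm (VV n d) (e + (D - e))" by (rule PF_mult[OF fe g(1)])
      then have "?\<mu> g \<in> PF cm (VV n d) D" using De by simp
      then show "y \<in> fs.span ?G" using g(2) mu_res sG by auto
    qed
    have inj: "inj_on ?\<mu> (fs.span ?G')"
    proof (subst mu.inj_on_iff_eq_0[OF fs.subspace_span], intro ballI impI)
      fix y assume y: "y \<in> fs.span ?G'" and y0: "?\<mu> y = 0"
      then obtain g where g: "g \<in> PF cm (VV n d) (D - e)" "y = res X g" using sG' by auto
      obtain q where q: "\<forall>M. mpeval q M = g M" using PF_mpeval[OF g(1) finite_VV] by blast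
      have fg: "\<forall>z\<in>X. f z = 0 \<or> g z = 0"
      proof
        fix z assume "z \<in> X"
        then have "f z * g z = 0" using y0 g(2) by (auto simp: res_def fun_eq_iff dest: fun_cong[of _ _ z])
        then show "f z = 0 \<or> g z = 0" by simp
      qed
      define X1 where "X1 = zvanish n d (PX \<union> {p})"
      define X2 where "X2 = zvanish n d (PX \<union> {q})"
      have c1: "zclosed n d X1" "zclosed n d X2" unfolding X1_def X2_def zclosed_def by blast+
      have "X = X1 \<union> X2"
      proof
        show "X \<subseteq> X1 \<union> X2"
        proof
          fix z assume z: "z \<in> X"
          then have zm: "z \<in> mats n d" and zP: "\<forall>p\<in>PX. mpeval p z = 0" using PX by (auto simp: zvanish_def)
          show "z \<in> X1 \<union> X2" using fg z zm zP f(2) q unfolding X1_def X2_def zvanish_def by auto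
        qed
        show "X1 \<union> X2 \<subseteq> X" unfolding X1_def X2_def PX zvanish_def by auto
      qed
      then have "X = X1 \<or> X = X2" using irr c1 unfolding zirreducible_def by blast
      moreover have "X \<noteq> X1"
      proof
        assume "X = X1"
        then have "mpeval p x = 0" using x(1) unfolding X1_def zvanish_def by auto
        then show False using p(2) by simp
      qed
      ultimately have "X = X2" by simp
      then have "\<forall>z\<in>X. g z = 0" using q unfolding X2_def zvanish_def by auto
      then show "y = 0" using g(2) by (auto simp: res_def fun_eq_iff)
    qed
    have zero: "res Y (?\<mu> y) = 0" if "y \<in> fs.span ?G'" for y
      using fY by (auto simp: res_def fun_eq_iff)
    have "fs.dim (res Y ` fs.span ?G) + fs.dim (fs.span ?G') \<le> fs.dim (fs.span ?G)"
    proof -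
      have fG: "finite ?G" by (rule finite_imageI, rule finite_monoms, rule finite_VV)
      have fG': "finite ?G'" by (rule finite_imageI, rule finite_monoms, rule finite_VV)
      show ?thesis
        by (rule dim_kernel_ineq[where \<rho>="res Y" and \<mu>="?\<mu>" and G="?G" and G'="?G'", OF res_lin l\<mu> fG fG' sub inj zero])
    qed
    moreover have "res Y ` fs.span ?G = res Y ` PF cm (VV n d) D"
      unfolding sG using res_res[of Y X] YX by (auto simp: image_image)
    ultimately show ?thesis unfolding hdim_def sG sG' by simp
  qed
  show ?thesis using main by (intro exI[of _ e]) (auto simp: e_def)
qed

declare fscale_apply[simp del]

lemma zclosure_sub: "S \<subseteq> zclosure n d S"
  unfolding zclosure_def by blast

lemma zclosure_mats: "zclosure n d S \<subseteq> mats n d" if "S \<subseteq> mats n d"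
proof -
  have "mats n d = zvanish n d {}" by (simp add: zvanish_def)
  then have "zclosed n d (mats n d)" unfolding zclosed_def by blast
  then show ?thesis using that unfolding zclosure_def by blast
qed

lemma span_res_PF: "fs.span (res X ` PF c I D) = res X ` PF c I D"
  by (simp add: res_PF fs.span_span)

lemma hdim_closure:
  fixes S :: "(nat list \<Rightarrow> nat list \<Rightarrow> 'a::field) set"
  assumes Sm: "S \<subseteq> mats n d"
  shows "hdim n d (zclosure n d S) D \<le> hdim n d S D"
proof -
  let ?cl = "zclosure n d S"
  let ?U = "res ?cl ` PF cm (VV n d) D"
  interpret r: module_hom fscale fscale "res S" by (rule res_lin)
  have img: "res S ` ?U = res S ` PF cm (VV n d) D"
    by (simp only: image_image res_res[OF zclosure_sub])
  have inj: "inj_on (res S) (fs.span ?U)"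
  proof (subst r.inj_on_iff_eq_0[OF fs.subspace_span], intro ballI impI)
    fix x assume x: "x \<in> fs.span ?U" and x0: "res S x = 0"
    then obtain g where g: "g \<in> PF cm (VV n d) D" "x = res ?cl g" unfolding span_res_PF by blast
    obtain q where q: "\<forall>M. mpeval q M = g M" using PF_mpeval[OF g(1) finite_VV] by blast
    have "\<forall>M\<in>S. g M = 0"
    proof
      fix M assume "M \<in> S"
      then have "res S x M = 0" "x M = g M" using x0 g(2) zclosure_sub[of S n d] by (auto simp: res_def)
      then show "g M = 0" using \<open>M \<in> S\<close> by (simp add: res_def)
    qed
    then have "S \<subseteq> zvanish n d {q}" using Sm q by (auto simp: zvanish_def)
    moreover have "zclosed n d (zvanish n d {q})" unfolding zclosed_def by blast
    ultimately have "?cl \<subseteq> zvanish n d {q}" unfolding zclosure_def by blast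
    then have "\<forall>M\<in>?cl. g M = 0" using q by (auto simp: zvanish_def)
    then show "x = 0" using g(2) by (auto simp: res_def fun_eq_iff)
  qed
  have "fs.dim (res S ` ?U) = fs.dim ?U" by (rule dim_image_eq_fin[OF res_lin inj])
  then show ?thesis unfolding hdim_def img by simp
qed

lemma dim_union_le:
  assumes "U \<subseteq> fs.span T1" "W \<subseteq> fs.span T2" "finite T1" "finite T2"
  shows "fs.dim (U \<union> W) \<le> fs.dim U + fs.dim W"
proof -
  obtain BU where BU: "BU \<subseteq> U" "fs.independent BU" "U \<subseteq> fs.span BU" "card BU = fs.dim U" "finite BU"
    using fin_basis[OF assms(1,3)] by blast
  obtain BW where BW: "BW \<subseteq> W" "fs.independent BW" "W \<subseteq> fs.span BW" "card BW = fs.dim W" "finite BW"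
    using fin_basis[OF assms(2,4)] by blast
  have "U \<union> W \<subseteq> fs.span (BU \<union> BW)"
    using BU(3) BW(3) fs.span_mono[of BU "BU \<union> BW"] fs.span_mono[of BW "BU \<union> BW"] by blast
  then have "fs.dim (U \<union> W) \<le> card (BU \<union> BW)" using BU(5) BW(5) by (intro fs.dim_le_card) auto
  also have "\<dots> \<le> card BU + card BW" by (rule card_Un_le)
  finally show ?thesis using BU(4) BW(4) by simp
qed

lemma hdim_union:
  "hdim n d (A \<union> B) D \<le> hdim n d A D + hdim n d B D"
proof -
  let ?R1 = "res A ` PF cm (VV n d) D"
  let ?R2 = "res (B - A) ` PF cm (VV n d) D"
  let ?T = "res A ` monoms cm (VV n d) D \<union> res (B - A) ` monoms cm (VV n d) D"
  have finT: "finite ?T" using finite_monoms[OF finite_VV] by blast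
  have "res (A \<union> B) ` PF cm (VV n d) D \<subseteq> fs.span (?R1 \<union> ?R2)"
  proof
    fix y assume "y \<in> res (A \<union> B) ` PF cm (VV n d) D"
    then obtain g where g: "g \<in> PF cm (VV n d) D" "y = res (A \<union> B) g" by blast
    have "y = res A g + res (B - A) g" using g(2) by (auto simp: res_def fun_eq_iff)
    moreover have "res A g \<in> fs.span (?R1 \<union> ?R2)" "res (B - A) g \<in> fs.span (?R1 \<union> ?R2)"
      using g(1) by (auto intro: fs.span_base)
    ultimately show "y \<in> fs.span (?R1 \<union> ?R2)" by (simp add: fs.span_add)
  qed
  moreover have "?R1 \<union> ?R2 \<subseteq> fs.span ?T"
    unfolding res_PF using fs.span_mono[of _ ?T] by blast
  ultimately have "hdim n d (A \<union> B) D \<le> fs.dim (?R1 \<union> ?R2)"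
    unfolding hdim_def using finT by (intro dim_mono_fin) auto
  also have "\<dots> \<le> fs.dim ?R1 + fs.dim ?R2"
    by (rule dim_union_le[of _ "res A ` monoms cm (VV n d) D" _ "res (B - A) ` monoms cm (VV n d) D"])
       (auto simp: res_PF finite_monoms finite_VV)
  also have "fs.dim ?R2 \<le> hdim n d B D" using hd_mono_X[of "B - A" B n d D] by (simp add: hdim_def)
  finally show ?thesis by (simp add: hdim_def)
qed

lemma hdim_empty: "hdim n d {} D = 0"
proof -
  have "res {} ` PF cm (VV n d) D \<subseteq> fs.span ({} :: ((nat list \<Rightarrow> nat list \<Rightarrow> 'a::field) \<Rightarrow> 'a) set)"
    by (auto simp: res_def fun_eq_iff)
  then have "hdim n d ({} :: (nat list \<Rightarrow> nat list \<Rightarrow> 'a) set) D \<le> card ({} :: ((nat list \<Rightarrow> nat list \<Rightarrow> 'a) \<Rightarrow> 'a) set)"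
    unfolding hdim_def by (rule fs.dim_le_card) simp
  then show ?thesis by simp
qed

lemma hdim_UN:
  assumes "finite F"
  shows "hdim n d (\<Union>k\<in>F. A k) D \<le> (\<Sum>k\<in>F. hdim n d (A k) D)"
  using assms
proof (induction F rule: finite_induct)
  case empty then show ?case by (simp add: hdim_empty)
next
  case (insert k F)
  have "hdim n d (\<Union>k\<in>insert k F. A k) D = hdim n d (A k \<union> (\<Union>k\<in>F. A k)) D" by simp
  also have "\<dots> \<le> hdim n d (A k) D + hdim n d (\<Union>k\<in>F. A k) D" by (rule hdim_union)
  also have "\<dots> \<le> hdim n d (A k) D + (\<Sum>k\<in>F. hdim n d (A k) D)" using insert by simp
  finally show ?case using insert by simp
qed

lemma hdim_param:
  fixes \<phi> :: "'y \<Rightarrow> (nat list \<Rightarrow> nat list \<Rightarrow> 'a::field)" and cp :: "'j \<Rightarrow> 'y \<Rightarrow> 'a"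
  assumes J: "finite J" and coord: "\<And>v. v \<in> VV n d \<Longrightarrow> (\<lambda>y. cm v (\<phi> y)) \<in> PF cp J 2"
  shows "hdim n d (range \<phi>) D \<le> (2 * card (VV n d) * D + 1) ^ card J"
proof -
  let ?E = "2 * card (VV n d) * D"
  let ?U = "res (range \<phi>) ` PF cm (VV n d) D"
  let ?L = "\<lambda>h :: (nat list \<Rightarrow> nat list \<Rightarrow> 'a) \<Rightarrow> 'a. (\<lambda>y. h (\<phi> y))"
  have lL: "module_hom fscale fscale ?L" by (rule linI) (auto simp: fun_eq_iff fscale_apply)
  interpret L: module_hom fscale fscale ?L by (rule lL)
  have inj: "inj_on ?L (fs.span ?U)"
  proof (subst L.inj_on_iff_eq_0[OF fs.subspace_span], intro ballI impI)
    fix x assume x: "x \<in> fs.span ?U" and x0: "?L x = 0"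
    then obtain g where g: "x = res (range \<phi>) g" unfolding span_res_PF by blast
    show "x = 0"
    proof
      fix M show "x M = 0 M"
      proof (cases "M \<in> range \<phi>")
        case True
        then obtain y where y: "M = \<phi> y" by blast
        have "x (\<phi> y) = 0" using fun_cong[OF x0, of y] by simp
        then show ?thesis using y by simp
      next
        case False then show ?thesis using g by (simp add: res_def)
      qed
    qed
  qed
  have mon: "?L m \<in> PF cp J ?E" if m: "m \<in> monoms cm (VV n d) D" for m
  proof -
    obtain a where a: "\<forall>v\<in>VV n d. a v \<le> D" "m = (\<lambda>M. \<Prod>v\<in>VV n d. cm v M ^ a v)"
      using m unfolding monoms_def by blast
    have "(\<lambda>y. \<Prod>v\<in>VV n d. cm v (\<phi> y) ^ a v) \<in> PF cp J (\<Sum>v\<in>VV n d. a v * 2)"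
      by (rule PF_prod[OF finite_VV]) (rule PF_power[OF coord])
    moreover have "(\<Sum>v\<in>VV n d. a v * 2) \<le> (\<Sum>v\<in>VV n d. D * 2)"
      using a(1) by (intro sum_mono) simp
    then have "(\<Sum>v\<in>VV n d. a v * 2) \<le> ?E" by simp
    ultimately show ?thesis using PF_mono a(2) by blast
  qed
  have LU: "?L ` ?U \<subseteq> PF cp J ?E"
  proof
    fix z assume "z \<in> ?L ` ?U"
    then obtain g where g: "g \<in> PF cm (VV n d) D" "z = ?L (res (range \<phi>) g)" by blast
    have "z = ?L g" using g(2) by (auto simp: res_def fun_eq_iff)
    moreover have "?L ` PF cm (VV n d) D \<subseteq> PF cp J ?E"
      unfolding PF_def L.span_image[symmetric] using mon unfolding PF_def
      by (intro fs.span_minimal) auto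
    ultimately show "z \<in> PF cp J ?E" using g(1) by blast
  qed
  have "hdim n d (range \<phi>) D = fs.dim (?L ` ?U)"
    unfolding hdim_def by (rule dim_image_eq_fin[OF lL inj, symmetric])
  also have "\<dots> \<le> fs.dim (PF cp J ?E)"
    by (rule dim_mono_fin[of _ _ "monoms cp J ?E"]) (use LU fs.span_superset in \<open>auto simp: PF_def finite_monoms J\<close>)
  also have "\<dots> \<le> (?E + 1) ^ card J" by (rule dim_PF[OF J])
  finally show ?thesis .
qed

lemma growth:
  fixes a :: "nat \<Rightarrow> nat \<Rightarrow> nat"
  assumes mono: "\<And>j D D'. j \<le> k \<Longrightarrow> D \<le> D' \<Longrightarrow> a j D \<le> a j D'"
    and pos: "\<And>j D. j \<le> k \<Longrightarrow> 1 \<le> a j D"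
    and step: "\<And>j. j < k \<Longrightarrow> \<exists>e\<ge>1. \<forall>D\<ge>e. a j D + a (Suc j) (D - e) \<le> a (Suc j) D"
  shows "\<exists>E\<ge>1. \<forall>t. (t + k) choose k \<le> a k (E * t)"
proof -
  have "\<forall>j. \<exists>e. j < k \<longrightarrow> e \<ge> 1 \<and> (\<forall>D\<ge>e. a j D + a (Suc j) (D - e) \<le> a (Suc j) D)"
    using step by blast
  then obtain e where e: "\<And>j. j < k \<Longrightarrow> e j \<ge> 1 \<and> (\<forall>D\<ge>e j. a j D + a (Suc j) (D - e j) \<le> a (Suc j) D)"
    by metis
  define E where "E = 1 + (\<Sum>j<k. e j)"
  have eE: "e j \<le> E" if "j < k" for j
  proof -
    have "e j \<le> (\<Sum>j<k. e j)" by (rule member_le_sum) (use that in auto)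
    then show ?thesis by (simp add: E_def)
  qed
  have step': "a j D + a (Suc j) (D - E) \<le> a (Suc j) D" if j: "j < k" and D: "D \<ge> E" for j D
  proof -
    have "D \<ge> e j" using eE[OF j] D by simp
    then have "a j D + a (Suc j) (D - e j) \<le> a (Suc j) D" using e[OF j] by blast
    moreover have "a (Suc j) (D - E) \<le> a (Suc j) (D - e j)"
      using mono[of "Suc j"] j eE[OF j] by simp
    ultimately show ?thesis by simp
  qed
  have main: "j \<le> k \<Longrightarrow> (\<forall>t. (t + j) choose j \<le> a j (E * t))" for j
  proof (induction j)
    case 0 then show ?case using pos[of 0] by simp
  next
    case (Suc j)
    have IHj: "\<forall>t. (t + j) choose j \<le> a j (E * t)" using Suc by simp
    have jk: "j < k" using Suc.prems by simp
    show ?case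
    proof
      fix t show "(t + Suc j) choose (Suc j) \<le> a (Suc j) (E * t)"
      proof (induction t)
        case 0 then show ?case using pos[of "Suc j"] Suc.prems by simp
      next
        case (Suc t)
        have "((Suc t + Suc j) choose (Suc j)) = ((t + Suc j) choose j) + ((t + Suc j) choose (Suc j))"
          by simp
        also have "(t + Suc j) choose j \<le> a j (E * Suc t)" using IHj[rule_format, of "Suc t"] by simp
        also have "(t + Suc j) choose (Suc j) \<le> a (Suc j) (E * t)" by (rule Suc.IH)
        also have "a j (E * Suc t) + a (Suc j) (E * t) \<le> a (Suc j) (E * Suc t)"
          using step'[OF jk, of "E * Suc t"] by simp
        finally show ?case by simp
      qed
    qed
  qed
  show ?thesis using main[of k] by (intro exI[of _ E]) (auto simp: E_def)
qed

lemma poly_vs_binom: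
  fixes c A p k :: nat
  assumes bound: "\<And>t. (t + k) choose k \<le> c * (A * t + 1) ^ p"
  shows "k \<le> p"
proof (rule ccontr)
  assume "\<not> k \<le> p"
  then have kp: "p + 1 \<le> k" by simp
  define B where "B = k ^ k * c * (A + 1) ^ p"
  define t where "t = B + 1"
  have t1: "1 \<le> t" by (simp add: t_def)
  have "(real (t + k) / real k) ^ k \<le> real ((t + k) choose k)"
    by (rule binomial_ge_n_over_k_pow_k) simp
  then have "real (t + k) ^ k \<le> real k ^ k * real ((t + k) choose k)"
    using kp by (simp add: power_divide field_simps)
  then have "real ((t + k) ^ k) \<le> real (k ^ k * ((t + k) choose k))" by simp
  then have "(t + k) ^ k \<le> k ^ k * ((t + k) choose k)" by (simp only: of_nat_le_iff)
  also have "\<dots> \<le> k ^ k * (c * (A * t + 1) ^ p)" using bound[of t] by simp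
  also have "(A * t + 1) ^ p \<le> ((A + 1) * t) ^ p"
    by (rule power_mono) (use t1 in \<open>simp_all add: algebra_simps\<close>)
  finally have 1: "(t + k) ^ k \<le> k ^ k * (c * ((A + 1) * t) ^ p)"
    by (simp add: mult_left_mono)
  have "t ^ (p + 1) \<le> t ^ k" by (rule power_increasing[OF kp t1])
  also have "\<dots> \<le> (t + k) ^ k" by (rule power_mono) simp_all
  finally have 4: "t ^ (p + 1) \<le> (t + k) ^ k" .
  have 2: "t ^ (p + 1) \<le> k ^ k * (c * ((A + 1) * t) ^ p)" using 4 1 by (rule le_trans)
  have 3: "k ^ k * (c * ((A + 1) * t) ^ p) = B * t ^ p"
    unfolding B_def power_mult_distrib by (simp only: ac_simps)
  have "t * t ^ p \<le> B * t ^ p" using 2 3 by simp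
  then have "t \<le> B" using t1 by (simp add: mult_le_cancel2)
  then show False by (simp add: t_def)
qed

definition cp :: "nat \<times> bool \<times> nat list \<Rightarrow> (nat \<Rightarrow> nat list \<Rightarrow> 'a) \<times> (nat \<Rightarrow> nat list \<Rightarrow> 'a) \<Rightarrow> 'a" where
  "cp j y = (case j of (t, b, i) \<Rightarrow> if b then fst y t i else snd y t i)"

definition JJ :: "nat \<Rightarrow> nat \<Rightarrow> nat \<Rightarrow> (nat \<times> bool \<times> nat list) set" where
  "JJ R n d = {0..<R} \<times> (UNIV :: bool set) \<times> idx_set n d"

lemma finite_JJ: "finite (JJ R n d)"
  unfolding JJ_def using finite_idx by auto

lemma card_JJ: "card (JJ R n d) = R * (2 * card (idx_set n d))"
  unfolding JJ_def by (simp add: card_cartesian_product)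

lemma phi_coord:
  assumes v: "v \<in> VV n d"
  shows "(\<lambda>y. cm v (phi n d R K (fst y) (snd y)) :: 'a::field) \<in> PF cp (JJ R n d) 2"
proof -
  obtain i j where ij: "v = (i, j)" "i \<in> idx_set n d" "j \<in> idx_set n d" using v by (auto simp: VV_def)
  have eq: "cm v (phi n d R K u w) = (\<Sum>t<R. u t (mix (K t) j i) * w t (mix (K t) i j))"
    for u w :: "nat \<Rightarrow> nat list \<Rightarrow> 'a"
  proof -
    have "cm v (phi n d R K u w) = (\<Sum>t<R. ptrans n d (K t) (outer n d (u t) (w t)) i j)"
      by (simp only: cm_def ij phi_def sum_fun_apply' fst_conv snd_conv)
    also have "\<dots> = (\<Sum>t<R. u t (mix (K t) j i) * w t (mix (K t) i j))"
      using ij by (intro sum.cong refl) (simp add: ptrans_def outer_def mix_idx)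
    finally show ?thesis .
  qed
  have "(\<lambda>y. \<Sum>t<R. fst y t (mix (K t) j i) * snd y t (mix (K t) i j)) \<in> PF cp (JJ R n d) 2"
  proof (rule PF_sum)
    fix t assume t: "t \<in> {..<R}"
    have c1: "cp (t, True, mix (K t) j i) \<in> PF cp (JJ R n d) 1"
      by (rule PF_coord) (use t ij mix_idx finite_JJ in \<open>auto simp: JJ_def\<close>)
    have c2: "cp (t, False, mix (K t) i j) \<in> PF cp (JJ R n d) 1"
      by (rule PF_coord) (use t ij mix_idx finite_JJ in \<open>auto simp: JJ_def\<close>)
    have "(\<lambda>y. cp (t, True, mix (K t) j i) y * cp (t, False, mix (K t) i j) y) \<in> PF cp (JJ R n d) (1 + 1)"
      by (rule PF_mult[OF c1 c2])
    then show "(\<lambda>y. fst y t (mix (K t) j i) * snd y t (mix (K t) i j)) \<in> PF cp (JJ R n d) 2"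
      unfolding one_add_one by (simp add: cp_def)
  qed
  then show ?thesis by (simp add: eq)
qed

lemma finite_Pat: "finite (Pat R d)"
  unfolding Pat_def by (intro finite_PiE) auto

lemma zdim_bound:
  fixes S :: "(nat list \<Rightarrow> nat list \<Rightarrow> 'a::field) set"
  assumes Sm: "S \<subseteq> mats n d" and Sr: "\<And>M. M \<in> S \<Longrightarrow> pt_rank n d M \<le> R"
  shows "zdim n d (zclosure n d S) \<le> enat (card (JJ R n d))"
  unfolding zdim_def
proof (rule Sup_least, clarify)
  fix k and Z :: "nat \<Rightarrow> (nat list \<Rightarrow> nat list \<Rightarrow> 'a) set"
  assume irr: "\<forall>t\<le>k. zirreducible n d (Z t) \<and> Z t \<subseteq> zclosure n d S"
    and ch: "\<forall>t<k. Z t \<subset> Z (Suc t)"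
  let ?p = "card (JJ R n d)"
  let ?cl = "zclosure n d S"
  let ?\<phi> = "\<lambda>K y. phi n d R K (fst y) (snd y) :: nat list \<Rightarrow> nat list \<Rightarrow> 'a"
  let ?a = "\<lambda>j D. hdim n d (Z j) D"
  obtain E where E: "E \<ge> 1" "\<forall>t. (t + k) choose k \<le> ?a k (E * t)"
  proof -
    have "\<exists>E\<ge>1. \<forall>t. (t + k) choose k \<le> ?a k (E * t)"
    proof (rule growth)
      show "?a j D \<le> ?a j D'" if "j \<le> k" "D \<le> D'" for j D D' using that by (simp add: hd_mono_D)
      show "1 \<le> ?a j D" if "j \<le> k" for j D
        using irr that by (intro hd_pos) (auto simp: zirreducible_def)
      show "\<exists>e\<ge>1. \<forall>D\<ge>e. ?a j D + ?a (Suc j) (D - e) \<le> ?a (Suc j) D" if j: "j < k" for j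
      proof (rule hd_step)
        show "zirreducible n d (Z (Suc j))" using irr j by simp
        show "zclosed n d (Z j)" using irr j by (simp add: zirreducible_def)
        show "Z j \<subset> Z (Suc j)" using ch j by simp
      qed
    qed
    then show ?thesis using that by blast
  qed
  have SU: "S \<subseteq> (\<Union>K\<in>Pat R d. range (?\<phi> K))"
  proof
    fix M assume M: "M \<in> S"
    then obtain K u v where "K \<in> Pat R d" "M = phi n d R K u v"
      using low_rank_param[of M n d R] Sm Sr by blast
    then show "M \<in> (\<Union>K\<in>Pat R d. range (?\<phi> K))"
      by (auto intro!: bexI[of _ K] image_eqI[of _ _ "(u, v)"])
  qed
  have upper: "?a k D \<le> card (Pat R d) * (2 * card (VV n d) * D + 1) ^ ?p" for D
  proof -
    have "?a k D \<le> hdim n d ?cl D" using irr by (intro hd_mono_X) auto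
    also have "\<dots> \<le> hdim n d S D" by (rule hdim_closure[OF Sm])
    also have "\<dots> \<le> hdim n d (\<Union>K\<in>Pat R d. range (?\<phi> K)) D" by (rule hd_mono_X[OF SU])
    also have "\<dots> \<le> (\<Sum>K\<in>Pat R d. hdim n d (range (?\<phi> K)) D)" by (rule hdim_UN[OF finite_Pat])
    also have "\<dots> \<le> (\<Sum>K\<in>Pat R d. (2 * card (VV n d) * D + 1) ^ ?p)"
      by (intro sum_mono hdim_param[where cp = cp, OF finite_JJ] phi_coord)
    also have "\<dots> = card (Pat R d) * (2 * card (VV n d) * D + 1) ^ ?p" by simp
    finally show ?thesis .
  qed
  have "\<And>t. (t + k) choose k \<le> card (Pat R d) * ((2 * card (VV n d) * E) * t + 1) ^ ?p"
    using E(2) upper by (metis le_trans mult.assoc)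
  then have "k \<le> ?p" by (rule poly_vs_binom)
  then show "enat k \<le> enat ?p" by simp
qed

lemma idx_set_eq: "idx_set n d = {xs. set xs \<subseteq> {0..<n} \<and> length xs = d}"
  unfolding idx_set_def by (auto simp: in_set_conv_nth subset_iff)

lemma card_idx: "card (idx_set n d) = n ^ d"
  unfolding idx_set_eq by (subst card_lists_length_eq) auto

lemma card_mats:
  assumes fin: "finite (UNIV :: 'a::field set)"
  shows "card (mats n d :: (nat list \<Rightarrow> nat list \<Rightarrow> 'a) set) = card (UNIV :: 'a set) ^ (card (idx_set n d) * card (idx_set n d))"
proof -
  let ?I = "idx_set n d \<times> idx_set n d"
  let ?P = "PiE ?I (\<lambda>_. UNIV :: 'a set)"
  let ?g = "\<lambda>x. (\<lambda>i j. if (i, j) \<in> ?I then x (i, j) else 0) :: nat list \<Rightarrow> nat list \<Rightarrow> 'a"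
  have finI: "finite ?I" using finite_idx by blast
  have img: "?g ` ?P = mats n d"
  proof
    show "?g ` ?P \<subseteq> mats n d" by (auto simp: mats_def)
    show "mats n d \<subseteq> ?g ` ?P"
    proof
      fix M :: "nat list \<Rightarrow> nat list \<Rightarrow> 'a" assume M: "M \<in> mats n d"
      have "M = ?g (restrict (\<lambda>(i, j). M i j) ?I)"
        using M by (auto simp: mats_def fun_eq_iff)
      moreover have "restrict (\<lambda>(i, j). M i j) ?I \<in> ?P" by simp
      ultimately show "M \<in> ?g ` ?P" by blast
    qed
  qed
  have inj: "inj_on ?g ?P"
  proof
    fix x y assume x: "x \<in> ?P" and y: "y \<in> ?P" and e: "?g x = ?g y"
    show "x = y"
    proof (rule PiE_ext[OF x y])
      fix ij assume ij: "ij \<in> ?I"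
      obtain i j where "ij = (i, j)" by (cases ij)
      then show "x ij = y ij" using ij fun_cong[OF fun_cong[OF e, of i], of j] by simp
    qed
  qed
  have "card (mats n d :: (nat list \<Rightarrow> nat list \<Rightarrow> 'a) set) = card ?P"
    using card_image[OF inj] img by simp
  also have "\<dots> = card (UNIV :: 'a set) ^ card ?I" using finI by (simp add: card_PiE)
  finally show ?thesis by (simp add: card_cartesian_product)
qed

lemma card_Pat: "card (Pat R d) = (2 ^ d) ^ R"
  unfolding Pat_def by (simp add: card_PiE card_Pow)

lemma finite_Par:
  assumes "finite (UNIV :: 'a set)"
  shows "finite (Par R n d :: (nat \<Rightarrow> nat list \<Rightarrow> 'a) set)"
  unfolding Par_def using assms finite_idx by (intro finite_PiE) auto

lemma card_Par:
  assumes "finite (UNIV :: 'a set)"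
  shows "card (Par R n d :: (nat \<Rightarrow> nat list \<Rightarrow> 'a) set) = (card (UNIV :: 'a set) ^ card (idx_set n d)) ^ R"
  unfolding Par_def using assms finite_idx by (simp add: card_PiE)

lemma card_low:
  fixes R :: nat
  assumes fin: "finite (UNIV :: 'a::field set)"
  shows "card {M :: nat list \<Rightarrow> nat list \<Rightarrow> 'a. M \<in> mats n d \<and> pt_rank n d M \<le> R}
     \<le> (2 ^ d) ^ R * (card (UNIV :: 'a set) ^ card (idx_set n d)) ^ R * (card (UNIV :: 'a set) ^ card (idx_set n d)) ^ R"
proof -
  let ?f = "\<lambda>(K, u, v). phi n d R K u v :: nat list \<Rightarrow> nat list \<Rightarrow> 'a"
  let ?D = "Pat R d \<times> (Par R n d :: (nat \<Rightarrow> nat list \<Rightarrow> 'a) set) \<times> (Par R n d :: (nat \<Rightarrow> nat list \<Rightarrow> 'a) set)"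
  have finD: "finite ?D" using finite_Pat finite_Par[OF fin] by blast
  have "{M :: nat list \<Rightarrow> nat list \<Rightarrow> 'a. M \<in> mats n d \<and> pt_rank n d M \<le> R} \<subseteq> ?f ` ?D"
  proof
    fix M :: "nat list \<Rightarrow> nat list \<Rightarrow> 'a" assume "M \<in> {M. M \<in> mats n d \<and> pt_rank n d M \<le> R}"
    then obtain K u v where "K \<in> Pat R d" "u \<in> Par R n d" "v \<in> Par R n d" "M = phi n d R K u v"
      using low_rank_param[of M n d R] by blast
    then show "M \<in> ?f ` ?D" by (auto intro!: image_eqI[of _ _ "(K, u, v)"])
  qed
  then have "card {M :: nat list \<Rightarrow> nat list \<Rightarrow> 'a. M \<in> mats n d \<and> pt_rank n d M \<le> R} \<le> card (?f ` ?D)"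
    using finD by (intro card_mono) auto
  also have "\<dots> \<le> card ?D" using finD by (rule card_image_le)
  also have "\<dots> = (2 ^ d) ^ R * (card (UNIV :: 'a set) ^ card (idx_set n d)) ^ R * (card (UNIV :: 'a set) ^ card (idx_set n d)) ^ R"
    by (simp add: card_cartesian_product card_Pat card_Par[OF fin])
  finally show ?thesis .
qed

lemma card_field_ge2:
  assumes "finite (UNIV :: 'a::field set)"
  shows "2 \<le> card (UNIV :: 'a set)"
proof -
  have "card {0::'a, 1} \<le> card (UNIV :: 'a set)" using assms by (intro card_mono) auto
  then show ?thesis by simp
qed

lemma le_natfloor: "real m \<le> x \<Longrightarrow> m \<le> nat \<lfloor>x\<rfloor>"
proof -
  assume "real m \<le> x"
  then have "int m \<le> \<lfloor>x\<rfloor>" by (simp add: le_floor_iff)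
  then show ?thesis by simp
qed

lemma natfloor_le: "1 \<le> nat \<lfloor>x\<rfloor> \<Longrightarrow> real (nat \<lfloor>x\<rfloor>) \<le> x"
proof -
  assume h: "1 \<le> nat \<lfloor>x\<rfloor>"
  have "0 \<le> \<lfloor>x\<rfloor>"
  proof (rule ccontr)
    assume "\<not> 0 \<le> \<lfloor>x\<rfloor>"
    then have "nat \<lfloor>x\<rfloor> = 0" by simp
    with h show False by simp
  qed
  then have "real (nat \<lfloor>x\<rfloor>) = of_int \<lfloor>x\<rfloor>" by simp
  also have "\<dots> \<le> x" by (rule of_int_floor_le)
  finally show ?thesis .
qed

lemma d_le_pow: "2 \<le> n \<Longrightarrow> 1 \<le> d \<Longrightarrow> d * n \<le> n ^ d"
proof -
  assume n: "2 \<le> n" and d: "1 \<le> d"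
  have "d - 1 < 2 ^ (d - 1)" by (rule less_exp)
  also have "(2::nat) ^ (d - 1) \<le> n ^ (d - 1)" by (rule power_mono) (use n in auto)
  finally have "d \<le> n ^ (d - 1)" using d by simp
  then have "d * n \<le> n ^ (d - 1) * n" by simp
  also have "\<dots> = n ^ d" using d by (simp add: power_Suc2[symmetric])
  finally show ?thesis .
qed

lemma n_le_pow: "1 \<le> (n::nat) \<Longrightarrow> 1 \<le> d \<Longrightarrow> n \<le> n ^ d"
  using power_increasing[of 1 d n] by simp

lemma low_set_sub:
  "{M :: nat list \<Rightarrow> nat list \<Rightarrow> 'a::field. M \<in> mats n d \<and> real (pt_rank n d M) \<le> x}
   \<subseteq> {M. M \<in> mats n d \<and> pt_rank n d M \<le> nat \<lfloor>x\<rfloor>}"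
  using le_natfloor by blast

lemma ratio_bound:
  fixes \<epsilon> :: real
  assumes fin: "finite (UNIV :: 'a::field set)" and d: "1 \<le> d" and n: "2 \<le> n"
    and e: "0 < \<epsilon>" "1 \<le> \<epsilon> * real n" "\<epsilon> \<le> real n"
  shows "real (card {M :: nat list \<Rightarrow> nat list \<Rightarrow> 'a. M \<in> mats n d \<and> real (pt_rank n d M) \<le> (1/2 - \<epsilon>) * real n ^ d})
         / real (card (mats n d :: (nat list \<Rightarrow> nat list \<Rightarrow> 'a) set)) \<le> 1 / (\<epsilon> * real n)"
proof -
  define N where "N = n ^ d"
  define q where "q = card (UNIV :: 'a set)"
  define x where "x = (1/2 - \<epsilon>) * real n ^ d"
  define R where "R = nat \<lfloor>x\<rfloor>"
  define a where "a = d * R + N * R + N * R"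
  have q2: "2 \<le> q" unfolding q_def by (rule card_field_ge2[OF fin])
  have cN: "card (idx_set n d) = N" by (simp add: card_idx N_def)
  have xN: "x = (1/2 - \<epsilon>) * real N" by (simp add: x_def N_def)
  have dn: "d * n \<le> N" unfolding N_def by (rule d_le_pow[OF n d])
  have nN: "n \<le> N" unfolding N_def using n d by (intro n_le_pow) auto
  have dN: "real d \<le> \<epsilon> * real N"
  proof -
    have "real d \<le> real d * (\<epsilon> * real n)" using e(2) by (simp add: mult_le_cancel_left1)
    also have "\<dots> = \<epsilon> * real (d * n)" by simp
    also have "\<dots> \<le> \<epsilon> * real N"
    proof -
      have "real (d * n) \<le> real N" using dn by (simp only: of_nat_le_iff)
      then show ?thesis by (rule mult_left_mono) (use e(1) in simp)
    qed
    finally show ?thesis .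
  qed
  let ?S = "{M :: nat list \<Rightarrow> nat list \<Rightarrow> 'a. M \<in> mats n d \<and> real (pt_rank n d M) \<le> (1/2 - \<epsilon>) * real n ^ d}"
  have cS: "card ?S \<le> q ^ a"
  proof -
    have "card ?S \<le> card {M :: nat list \<Rightarrow> nat list \<Rightarrow> 'a. M \<in> mats n d \<and> pt_rank n d M \<le> R}"
    proof (rule card_mono)
      show "finite {M :: nat list \<Rightarrow> nat list \<Rightarrow> 'a. M \<in> mats n d \<and> pt_rank n d M \<le> R}"
      proof (rule finite_subset)
        show "finite (mats n d :: (nat list \<Rightarrow> nat list \<Rightarrow> 'a) set)"
        proof (rule card_ge_0_finite)
          show "0 < card (mats n d :: (nat list \<Rightarrow> nat list \<Rightarrow> 'a) set)"
            using card_mats[OF fin, of n d] card_field_ge2[OF fin] by simp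
        qed
      qed auto
      show "?S \<subseteq> {M. M \<in> mats n d \<and> pt_rank n d M \<le> R}"
        unfolding R_def x_def by (rule low_set_sub)
    qed
    also have "\<dots> \<le> (2 ^ d) ^ R * (q ^ N) ^ R * (q ^ N) ^ R"
      using card_low[OF fin, of n d R] by (simp add: cN q_def)
    also have "\<dots> \<le> (q ^ d) ^ R * (q ^ N) ^ R * (q ^ N) ^ R"
      using q2 by (intro mult_right_mono power_mono) auto
    also have "\<dots> = q ^ a" by (simp add: a_def power_add power_mult)
    finally show ?thesis .
  qed
  have key: "real a + \<epsilon> * real n \<le> real (N * N)"
  proof (cases "R = 0")
    case True
    have "\<epsilon> * real n \<le> real n * real n" using e(3) by (intro mult_right_mono) auto
    also have "\<dots> \<le> real N * real N" using nN by (intro mult_mono) auto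
    finally show ?thesis using True by (simp add: a_def)
  next
    case False
    then have R1: "1 \<le> R" by simp
    have Rx: "real R \<le> x" unfolding R_def by (rule natfloor_le) (use R1 R_def in simp)
    have Npos: "0 < real N" using nN n by simp
    have hpos: "0 < 1/2 - \<epsilon>"
    proof (rule ccontr)
      assume "\<not> 0 < 1/2 - \<epsilon>"
      then have "x \<le> 0" unfolding xN using Npos by (simp add: mult_nonpos_nonneg)
      then show False using Rx R1 by simp
    qed
    have "real a = (real d + 2 * real N) * real R" by (simp add: a_def algebra_simps)
    also have "\<dots> \<le> (real d + 2 * real N) * ((1/2 - \<epsilon>) * real N)"
      using Rx xN by (intro mult_left_mono) auto
    also have "\<dots> = real d * real N / 2 - \<epsilon> * (real d * real N) + real N * real N - 2 * (\<epsilon> * (real N * real N))"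
      by (simp add: algebra_simps)
    also have "\<dots> \<le> real d * real N / 2 + real N * real N - 2 * (\<epsilon> * (real N * real N))"
      using e(1) by simp
    finally have 1: "real a \<le> real d * real N / 2 + real N * real N - 2 * (\<epsilon> * (real N * real N))" .
    have 2: "real d * real N \<le> \<epsilon> * (real N * real N)"
    proof -
      have "real d * real N \<le> (\<epsilon> * real N) * real N" using dN Npos by (intro mult_right_mono) auto
      then show ?thesis by (simp add: mult.assoc)
    qed
    have 3: "\<epsilon> * real n \<le> \<epsilon> * (real N * real N)"
    proof -
      have "real n \<le> real N" using nN by simp
      also have "\<dots> \<le> real N * real N" using Npos nN n by (simp add: mult_le_cancel_left1)
      finally show ?thesis using e(1) by (intro mult_left_mono) auto
    qed
    have 4: "0 \<le> \<epsilon> * (real N * real N)" using e(1) by simp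
    have "real a + \<epsilon> * real n \<le> real N * real N" using 1 2 3 4 by linarith
    then show ?thesis by simp
  qed
  have pos: "0 < \<epsilon> * real n" using e n by simp
  have "real a \<le> real (N * N)" using key pos by linarith
  then have aNN: "a \<le> N * N" by (simp only: of_nat_le_iff)
  define m where "m = N * N - a"
  have am: "N * N = a + m" using aNN by (simp add: m_def)
  have mge: "\<epsilon> * real n \<le> real m"
  proof -
    have "real (N * N) = real a + real m" using am by (metis of_nat_add)
    then show ?thesis using key by linarith
  qed
  have cM: "card (mats n d :: (nat list \<Rightarrow> nat list \<Rightarrow> 'a) set) = q ^ a * q ^ m"
    using card_mats[OF fin, of n d] unfolding cN q_def[symmetric] am power_add .
  have qm: "real m < real (q ^ m)"
  proof -
    have "m < 2 ^ m" by (rule less_exp)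
    also have "(2::nat) ^ m \<le> q ^ m" using q2 by (rule power_mono) simp
    finally show ?thesis by (simp only: of_nat_less_iff)
  qed
  have c1: "real (card ?S) \<le> real (q ^ a)" using cS by (simp only: of_nat_le_iff)
  have qa: "real (q ^ a) \<noteq> 0" using q2 by simp
  have "real (card ?S) / real (card (mats n d :: (nat list \<Rightarrow> nat list \<Rightarrow> 'a) set))
      = real (card ?S) / (real (q ^ a) * real (q ^ m))" by (simp only: cM of_nat_mult)
  also have "\<dots> \<le> real (q ^ a) / (real (q ^ a) * real (q ^ m))"
    by (rule divide_right_mono[OF c1]) simp
  also have "\<dots> = 1 / real (q ^ m)" using qa by (rule nonzero_divide_mult_cancel_left)
  also have "\<dots> \<le> 1 / (\<epsilon> * real n)"
  proof (rule divide_left_mono)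
    have "real m < real q ^ m" using qm by (simp only: of_nat_power)
    then have "\<epsilon> * real n \<le> real q ^ m" using mge by linarith
    then show "\<epsilon> * real n \<le> real (q ^ m)" by (simp only: of_nat_power)
    show "0 < real (q ^ m) * (\<epsilon> * real n)" using pos q2 by simp
  qed simp
  finally show ?thesis .
qed

lemma nz1: "(r::nat) \<noteq> 0 \<Longrightarrow> 1 \<le> r" by simp

lemma two_R_lt:
  fixes \<epsilon> :: real
  assumes e: "0 < \<epsilon>" and N: "1 \<le> N"
  shows "2 * nat \<lfloor>(1/2 - \<epsilon>) * real N\<rfloor> < N"
proof (cases "nat \<lfloor>(1/2 - \<epsilon>) * real N\<rfloor> = 0")
  case True then show ?thesis using N by simp
next
  case False
  then have "1 \<le> nat \<lfloor>(1/2 - \<epsilon>) * real N\<rfloor>" by (rule nz1)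
  then have "real (nat \<lfloor>(1/2 - \<epsilon>) * real N\<rfloor>) \<le> (1/2 - \<epsilon>) * real N"
    by (rule natfloor_le)
  moreover have "0 < \<epsilon> * real N" using e N by simp
  ultimately have "real (2 * nat \<lfloor>(1/2 - \<epsilon>) * real N\<rfloor>) < real N"
    by (simp add: algebra_simps)
  then show ?thesis by (simp only: of_nat_less_iff)
qed

theorem proposition3p17:
  fixes \<epsilon> :: real and d :: "nat \<Rightarrow> nat"
  assumes "\<epsilon> > 0" and "\<forall>n. d n \<ge> 1"
  shows "(finite (UNIV :: 'a::field set) \<longrightarrow>
           ((\<lambda>n. real (card {M :: nat list \<Rightarrow> nat list \<Rightarrow> 'a. M \<in> mats n (d n) \<and>
                      real (pt_rank n (d n) M) \<le> (1/2 - \<epsilon>) * real n ^ d n})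
                 / real (card (mats n (d n) :: (nat list \<Rightarrow> nat list \<Rightarrow> 'a) set)))
              \<longlonglongrightarrow> 0))
       \<and> (infinite (UNIV :: 'a set) \<longrightarrow>
           (\<forall>\<^sub>F n in sequentially.
              zdim n (d n) (zclosure n (d n) {M :: nat list \<Rightarrow> nat list \<Rightarrow> 'a. M \<in> mats n (d n) \<and>
                      real (pt_rank n (d n) M) \<le> (1/2 - \<epsilon>) * real n ^ d n})
              < enat (n ^ (2 * d n))))"
proof (intro conjI impI)
  have e: "0 < \<epsilon>" using assms(1) .
  have d1: "\<And>n. 1 \<le> d n" using assms(2) by simp
  assume fin: "finite (UNIV :: 'a set)"
  let ?r = "\<lambda>n. real (card {M :: nat list \<Rightarrow> nat list \<Rightarrow> 'a. M \<in> mats n (d n) \<and>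
                      real (pt_rank n (d n) M) \<le> (1/2 - \<epsilon>) * real n ^ d n})
                 / real (card (mats n (d n) :: (nat list \<Rightarrow> nat list \<Rightarrow> 'a) set))"
  show "?r \<longlonglongrightarrow> 0"
  proof (rule tendsto_sandwich[of "\<lambda>_. 0" _ _ "\<lambda>n. 1 / (\<epsilon> * real n)"])
    show "\<forall>\<^sub>F n in sequentially. 0 \<le> ?r n" by (simp add: divide_nonneg_nonneg)
    show "\<forall>\<^sub>F n in sequentially. ?r n \<le> 1 / (\<epsilon> * real n)"
    proof (rule eventually_sequentiallyI[of "nat \<lceil>1 / \<epsilon> + \<epsilon>\<rceil> + 2"])
      fix n assume n: "nat \<lceil>1 / \<epsilon> + \<epsilon>\<rceil> + 2 \<le> n"
      have n2: "2 \<le> n" using n by simp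
      have "1 / \<epsilon> + \<epsilon> \<le> real (nat \<lceil>1 / \<epsilon> + \<epsilon>\<rceil>)" by (rule real_nat_ceiling_ge)
      also have "\<dots> \<le> real n"
      proof -
        have "nat \<lceil>1 / \<epsilon> + \<epsilon>\<rceil> \<le> n" using n by linarith
        then show ?thesis by (simp only: of_nat_le_iff)
      qed
      finally have big: "1 / \<epsilon> + \<epsilon> \<le> real n" .
      have ie: "0 < 1 / \<epsilon>" using e by simp
      have "1 / \<epsilon> \<le> real n" using big e by simp
      then have "\<epsilon> * (1 / \<epsilon>) \<le> \<epsilon> * real n" using e by (intro mult_left_mono) auto
      then have en: "1 \<le> \<epsilon> * real n" using e by simp
      have "\<epsilon> \<le> real n" using big ie by linarith
      then show "?r n \<le> 1 / (\<epsilon> * real n)"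
        by (rule ratio_bound[OF fin d1 n2 e en])
    qed
    show "(\<lambda>_. 0) \<longlonglongrightarrow> (0::real)" by simp
    have "(\<lambda>n. inverse \<epsilon> * inverse (real n)) \<longlonglongrightarrow> inverse \<epsilon> * 0"
      by (intro tendsto_mult tendsto_const lim_inverse_n)
    moreover have "(\<lambda>n. inverse \<epsilon> * inverse (real n)) = (\<lambda>n. 1 / (\<epsilon> * real n))"
      by (simp add: fun_eq_iff field_simps)
    ultimately show "(\<lambda>n. 1 / (\<epsilon> * real n)) \<longlonglongrightarrow> 0" by simp
  qed
next
  have e: "0 < \<epsilon>" using assms(1) .
  have d1: "\<And>n. 1 \<le> d n" using assms(2) by simp
  show "\<forall>\<^sub>F n in sequentially.
              zdim n (d n) (zclosure n (d n) {M :: nat list \<Rightarrow> nat list \<Rightarrow> 'a. M \<in> mats n (d n) \<and>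
                      real (pt_rank n (d n) M) \<le> (1/2 - \<epsilon>) * real n ^ d n})
              < enat (n ^ (2 * d n))"
  proof (rule eventually_sequentiallyI[of 1])
    fix n :: nat assume n: "1 \<le> n"
    define N where "N = n ^ d n"
    define R where "R = nat \<lfloor>(1/2 - \<epsilon>) * real N\<rfloor>"
    let ?S = "{M :: nat list \<Rightarrow> nat list \<Rightarrow> 'a. M \<in> mats n (d n) \<and>
                      real (pt_rank n (d n) M) \<le> (1/2 - \<epsilon>) * real n ^ d n}"
    have N1: "1 \<le> N" unfolding N_def using n by simp
    have "zdim n (d n) (zclosure n (d n) ?S) \<le> enat (card (JJ R n (d n)))"
    proof (rule zdim_bound)
      show "?S \<subseteq> mats n (d n)" by blast
      fix M assume "M \<in> ?S"
      then have "real (pt_rank n (d n) M) \<le> (1/2 - \<epsilon>) * real N" by (simp add: N_def)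
      then show "pt_rank n (d n) M \<le> R" unfolding R_def by (rule le_natfloor)
    qed
    also have "card (JJ R n (d n)) = (2 * R) * N" by (simp add: card_JJ card_idx N_def)
    also have "enat ((2 * R) * N) < enat (n ^ (2 * d n))"
    proof -
      have "2 * R < N" unfolding R_def by (rule two_R_lt[OF e N1])
      then have "(2 * R) * N < N * N" using N1 by simp
      also have "N * N = n ^ (2 * d n)" by (simp add: N_def power_mult[symmetric] power2_eq_square[symmetric] mult.commute)
      finally show ?thesis by simp
    qed
    finally show "zdim n (d n) (zclosure n (d n) ?S) < enat (n ^ (2 * d n))" .
  qed
qed

end
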